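(* Let $\mathbb{F}$ be an infinite field and $d\in\{1,2,3\}$. Then the set $S(d)$ is a minimal (with respect to inclusion) separating set for $R^{GL(2)}$.
   Context: Let $R=R_{2,d}=\mathbb{F}[x_{ij}(k)\mid 1\leq i,j\leq 2,\ 1\leq k\leq d]$ and let $X_k=(x_{ij}(k))$ be the $2\times 2$ generic matrices; $GL(2)$ acts by $g\cdot x_{ij}(k)=(g^{-1}X_kg)_{ij}$ and $R^{GL(2)}$ is the invariant algebra. Elements of $R$ are functions on $H=M(2)^{\oplus d}$ via $x_{ij}(k)(A_1,\dots,A_d)=(A_k)_{ij}$. Points $u,v\in H$ are separated by $S\subseteq R^{GL(2)}$ if $f(u)\neq f(v)$ for some $f\in S$, and separated if separated by $R^{GL(2)}$; $S$ is separating if every separated pair is separated by $S$. Here $S(d)$ consists of $\mathrm{tr}(X_i),\det(X_i)$ for $1\le i\le d$, $\mathrm{tr}(X_iX_j)$ for $1\le i<j\le d$, and $\mathrm{tr}(X_iX_jX_k)$ for $1\le i<j<k\le d$. *)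

theory Defs
  imports "HOL-Analysis.Analysis"
begin

type_synonym 'a mat2 = "'a^2^2"

text \<open>Points of H = M(2)^d: tuples (A_0,...,A_{d-1}) encoded as functions nat => 2x2 matrices
  which vanish at indices >= d (indices are 0-based).\<close>
definition H :: "nat \<Rightarrow> (nat \<Rightarrow> 'a::field mat2) set" where
  "H d = {u. \<forall>k\<ge>d. u k = 0}"

text \<open>Polynomial functions in the coordinates x_ij(k), k < d (elements of R = R_{2,d},
  viewed as functions on H).\<close>
inductive_set polyfun :: "nat \<Rightarrow> ((nat \<Rightarrow> 'a::field mat2) \<Rightarrow> 'a) set" for d :: nat where
  pf_const: "(\<lambda>u. c) \<in> polyfun d"
| pf_var: "k < d \<Longrightarrow> (\<lambda>u. u k $ i $ j) \<in> polyfun d"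
| pf_add: "f \<in> polyfun d \<Longrightarrow> g \<in> polyfun d \<Longrightarrow> (\<lambda>u. f u + g u) \<in> polyfun d"
| pf_mult: "f \<in> polyfun d \<Longrightarrow> g \<in> polyfun d \<Longrightarrow> (\<lambda>u. f u * g u) \<in> polyfun d"

definition inv_alg :: "nat \<Rightarrow> ((nat \<Rightarrow> 'a::field mat2) \<Rightarrow> 'a) set" where
  "inv_alg d = {f \<in> polyfun d. \<forall>g::'a mat2. \<forall>u \<in> H d. invertible g \<longrightarrow>
       f (\<lambda>k. matrix_inv g ** u k ** g) = f u}"

definition separated_by :: "((nat \<Rightarrow> 'a mat2) \<Rightarrow> 'a) set \<Rightarrow> (nat \<Rightarrow> 'a mat2) \<Rightarrow> (nat \<Rightarrow> 'a mat2) \<Rightarrow> bool" where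
  "separated_by S u v \<longleftrightarrow> (\<exists>f\<in>S. f u \<noteq> f v)"

definition separating :: "nat \<Rightarrow> ((nat \<Rightarrow> 'a::field mat2) \<Rightarrow> 'a) set \<Rightarrow> bool" where
  "separating d S \<longleftrightarrow> S \<subseteq> inv_alg d \<and>
     (\<forall>u\<in>H d. \<forall>v\<in>H d. separated_by (inv_alg d) u v \<longrightarrow> separated_by S u v)"

definition minimal_separating :: "nat \<Rightarrow> ((nat \<Rightarrow> 'a::field mat2) \<Rightarrow> 'a) set \<Rightarrow> bool" where
  "minimal_separating d S \<longleftrightarrow> separating d S \<and> (\<forall>S'. S' \<subset> S \<longrightarrow> \<not> separating d S')"

definition Sset :: "nat \<Rightarrow> ((nat \<Rightarrow> 'a::field mat2) \<Rightarrow> 'a) set" where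
  "Sset d = {(\<lambda>u. trace (u i)) | i. i < d}
          \<union> {(\<lambda>u. det (u i)) | i. i < d}
          \<union> {(\<lambda>u. trace (u i ** u j)) | i j. i < j \<and> j < d}
          \<union> {(\<lambda>u. trace (u i ** u j ** u k)) | i j k. i < j \<and> j < k \<and> k < d}"

end

theory Submission
  imports Defs "HOL-Computational_Algebra.Polynomial"
begin

definition mk :: "'a::field \<Rightarrow> 'a \<Rightarrow> 'a \<Rightarrow> 'a \<Rightarrow> 'a mat2" where
  "mk a b c d = (\<chi> i j. if i = 1 then (if j = 1 then a else b) else (if j = 1 then c else d))"

lemma two_ne: "(1::2) \<noteq> 2" by simp

lemma mk_nth[simp]: "mk a b c d $ 1 $ 1 = a" "mk a b c d $ 1 $ 2 = b"
  "mk a b c d $ 2 $ 1 = c" "mk a b c d $ 2 $ 2 = d"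
  by (simp_all add: mk_def)

lemma mat2_eq: "(A::'a::field mat2) = B \<longleftrightarrow> A$1$1 = B$1$1 \<and> A$1$2 = B$1$2 \<and> A$2$1 = B$2$1 \<and> A$2$2 = B$2$2"
  by (auto simp: vec_eq_iff forall_2)

lemma mm_nth[simp]: "((A::'a::field mat2) ** B) $ i $ j = A$i$1 * B$1$j + A$i$2 * B$2$j"
  by (simp add: matrix_matrix_mult_def sum_2)

lemma mat_nth[simp]: "(mat k :: 'a::field mat2) $ 1 $ 1 = k" "(mat k :: 'a::field mat2) $ 2 $ 2 = k"
  "(mat k :: 'a::field mat2) $ 1 $ 2 = 0" "(mat k :: 'a::field mat2) $ 2 $ 1 = 0"
  by (simp_all add: mat_def)

lemma tr2: "trace (A::'a::field mat2) = A$1$1 + A$2$2"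
  by (simp add: trace_def sum_2)

lemmas m2 = mat2_eq tr2 det_2

lemma ex1: fixes X Y :: "'a::field mat2"
  shows "det (X ** Y - Y ** X) = - ((trace (X**Y))^2 - trace X * trace Y * trace (X**Y) + det X * (trace Y)^2 + det Y * (trace X)^2 - 4 * det X * det Y)"
  by (simp add: m2 power2_eq_square algebra_simps)

lemma ex3: fixes X Y Z :: "'a::field mat2"
  shows "trace (X ** Z ** Y) = trace X * trace (Y**Z) + trace Y * trace (X**Z) + trace Z * trace (X**Y) - trace X * trace Y * trace Z - trace (X ** Y ** Z)"
  by (simp add: m2 algebra_simps)

lemma polyfun_cong: "f \<in> polyfun d \<Longrightarrow> (\<And>k. k < d \<Longrightarrow> u k = u' k) \<Longrightarrow> f u = f u'"
  by (induction f rule: polyfun.induct) auto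

lemma polyfun_mono: "f \<in> polyfun d \<Longrightarrow> d \<le> e \<Longrightarrow> f \<in> polyfun e"
  by (induction f rule: polyfun.induct) (auto intro: polyfun.intros)

lemma polyfun_curve:
  fixes w :: "'a::field \<Rightarrow> nat \<Rightarrow> 'a mat2"
  assumes "f \<in> polyfun d" and "\<And>k i j. \<exists>p. \<forall>t. w t k $ i $ j = poly p t"
  shows "\<exists>p. \<forall>t. f (w t) = poly p t"
  using assms(1)
proof (induction f rule: polyfun.induct)
  case (pf_const c) then show ?case by (intro exI[of _ "[:c:]"]) simp
next
  case (pf_var k i j) then show ?case using assms(2) by blast
next
  case (pf_add f g)
  then obtain p q where "\<forall>t. f (w t) = poly p t" "\<forall>t. g (w t) = poly q t" by blast
  then show ?case by (intro exI[of _ "p + q"]) simp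
next
  case (pf_mult f g)
  then obtain p q where "\<forall>t. f (w t) = poly p t" "\<forall>t. g (w t) = poly q t" by blast
  then show ?case by (intro exI[of _ "p * q"]) simp
qed

lemma poly_const_limit:
  assumes inf: "infinite (UNIV :: 'a::field set)" and h: "\<And>t::'a. t \<noteq> 0 \<Longrightarrow> poly p t = c"
  shows "poly p 0 = c"
proof -
  have "{t. poly (p - [:c:]) t = 0} \<supseteq> UNIV - {0}" using h by auto
  moreover have "infinite (UNIV - {0::'a})" using inf by simp
  ultimately have "infinite {t. poly (p - [:c:]) t = 0}" using finite_subset by blast
  then have "p - [:c:] = 0" using poly_roots_finite by blast
  then show ?thesis by (metis diff_eq_eq poly_pCons poly_0 add.left_neutral mult_zero_right add.right_neutral)
qed

definition cj :: "'a::field mat2 \<Rightarrow> 'a mat2 \<Rightarrow> 'a mat2" where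
  "cj g X = matrix_inv g ** X ** g"

definition cjU :: "'a::field mat2 \<Rightarrow> (nat \<Rightarrow> 'a mat2) \<Rightarrow> (nat \<Rightarrow> 'a mat2)" where
  "cjU g u = (\<lambda>k. matrix_inv g ** u k ** g)"

definition eqv :: "(nat \<Rightarrow> 'a::field mat2) \<Rightarrow> (nat \<Rightarrow> 'a mat2) \<Rightarrow> bool" where
  "eqv u v \<longleftrightarrow> (\<forall>f \<in> inv_alg 3. f u = f v)"

lemma eqv_refl: "eqv u u" by (simp add: eqv_def)
lemma eqv_sym: "eqv u v \<Longrightarrow> eqv v u" by (auto simp: eqv_def)
lemma eqv_trans: "eqv u v \<Longrightarrow> eqv v w \<Longrightarrow> eqv u w" by (auto simp: eqv_def)

lemma eqv_cjU: "u \<in> H 3 \<Longrightarrow> invertible g \<Longrightarrow> eqv u (cjU g u)"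
  by (auto simp: eqv_def inv_alg_def cjU_def)

lemma cjU_H: "u \<in> H d \<Longrightarrow> cjU g u \<in> H d"
  by (auto simp: H_def cjU_def)

lemma inv_alg_3:
  assumes "f \<in> inv_alg d" "d \<le> 3" shows "f \<in> inv_alg 3"
proof -
  have pf: "f \<in> polyfun d" using assms by (simp add: inv_alg_def)
  have "f (\<lambda>k. matrix_inv g ** u k ** g) = f u" if "u \<in> H 3" "invertible g" for u and g :: "'a mat2"
  proof -
    define u' where "u' = (\<lambda>k. if k < d then u k else 0)"
    have u'H: "u' \<in> H d" by (simp add: u'_def H_def)
    have "f (\<lambda>k. matrix_inv g ** u k ** g) = f (\<lambda>k. matrix_inv g ** u' k ** g)"
      by (rule polyfun_cong[OF pf]) (simp add: u'_def)
    also have "\<dots> = f u'" using assms u'H that by (simp add: inv_alg_def)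
    also have "\<dots> = f u" by (rule polyfun_cong[OF pf]) (simp add: u'_def)
    finally show ?thesis .
  qed
  then show ?thesis using polyfun_mono[OF pf assms(2)] by (simp add: inv_alg_def)
qed

lemma inv2:
  fixes g :: "'a::field mat2"
  assumes "det g \<noteq> 0"
  shows "invertible g" "matrix_inv g ** g = mat 1" "g ** matrix_inv g = mat 1"
proof -
  define D where "D = det g"
  have D0: "D \<noteq> 0" using assms by (simp add: D_def)
  have Deq: "D = g$1$1 * g$2$2 - g$1$2 * g$2$1" by (simp add: D_def det_2)
  define B where "B = mk (g$2$2 / D) (- g$1$2 / D) (- g$2$1 / D) (g$1$1 / D)"
  have 1: "g ** B = mat 1" "B ** g = mat 1"
    using D0 by (simp_all add: B_def mat2_eq field_simps) (simp_all add: Deq algebra_simps)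
  then show "invertible g" by (auto simp: invertible_def)
  have "g ** matrix_inv g = mat 1 \<and> matrix_inv g ** g = mat 1"
    unfolding matrix_inv_def by (rule someI[of _ B]) (use 1 in auto)
  then show "matrix_inv g ** g = mat 1" "g ** matrix_inv g = mat 1" by auto
qed

lemma inv2': "invertible (g::'a::field mat2) \<Longrightarrow> matrix_inv g ** g = mat 1 \<and> g ** matrix_inv g = mat 1"
  using inv2 invertible_det_nz by blast

lemma cj_rel: "invertible g \<Longrightarrow> X ** g = g ** Y \<Longrightarrow> cj g X = (Y::'a::field mat2)"
proof -
  assume i: "invertible g" and e: "X ** g = g ** Y"
  have "cj g X = matrix_inv g ** (X ** g)" by (simp add: cj_def matrix_mul_assoc)
  also have "\<dots> = (matrix_inv g ** g) ** Y" by (simp add: e matrix_mul_assoc)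
  finally show ?thesis using inv2'[OF i] by simp
qed

lemma cj_rel2: "invertible g \<Longrightarrow> g ** cj g X = (X::'a::field mat2) ** g"
proof -
  assume i: "invertible g"
  have "g ** cj g X = (g ** matrix_inv g) ** X ** g" by (simp add: cj_def matrix_mul_assoc)
  then show ?thesis using inv2'[OF i] by simp
qed

lemma cj_mult: "invertible g \<Longrightarrow> cj g ((X::'a::field mat2) ** Y) = cj g X ** cj g Y"
proof -
  assume i: "invertible g"
  have "cj g X ** cj g Y = matrix_inv g ** X ** (g ** matrix_inv g) ** Y ** g"
    by (simp add: cj_def matrix_mul_assoc)
  then show ?thesis using inv2'[OF i] by (simp add: cj_def matrix_mul_assoc)
qed

lemma cj_add: "cj g ((X::'a::field mat2) + Y) = cj g X + cj g Y"
  by (simp add: cj_def mat2_eq algebra_simps)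

lemma cj_diff: "cj g ((X::'a::field mat2) - Y) = cj g X - cj g Y"
  by (simp add: cj_def mat2_eq algebra_simps)

lemma cj_mat: "invertible g \<Longrightarrow> cj g (mat c) = (mat c::'a::field mat2)"
  by (rule cj_rel) (simp_all add: mat2_eq mult.commute)

lemma trace_cj: "invertible g \<Longrightarrow> trace (cj g (X::'a::field mat2)) = trace X"
proof -
  assume i: "invertible g"
  have "trace (cj g X) = trace ((matrix_inv g ** X) ** g)" by (simp add: cj_def)
  also have "\<dots> = trace (g ** (matrix_inv g ** X))" by (rule trace_mul_sym)
  also have "\<dots> = trace ((g ** matrix_inv g) ** X)" by (simp add: matrix_mul_assoc)
  finally show ?thesis using inv2'[OF i] by simp
qed

lemma det_cj: "invertible g \<Longrightarrow> det (cj g (X::'a::field mat2)) = det X"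
proof -
  assume "invertible g"
  then have "det (matrix_inv g) * det g = 1" using inv2' det_mul det_I by metis
  then show ?thesis by (simp add: cj_def det_mul algebra_simps)
qed

lemma det_nz_inv: "det (g::'a::field mat2) \<noteq> 0 \<Longrightarrow> invertible g" using inv2 by blast

lemma tri_limit:
  fixes u :: "nat \<Rightarrow> 'a::field mat2"
  assumes inf: "infinite (UNIV :: 'a set)" and uH: "u \<in> H 3" and tri: "\<And>k. k < 3 \<Longrightarrow> u k $ 2 $ 1 = 0"
  shows "eqv u (\<lambda>k. if k < 3 then mk (u k$1$1) 0 0 (u k$2$2) else 0)"
proof -
  define w where "w t = (\<lambda>k. if k < 3 then mk (u k$1$1) (t * u k$1$2) 0 (u k$2$2) else 0)" for t :: 'a
  have w1: "w 1 = u"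
  proof
    fix k show "w 1 k = u k" using uH tri[of k] by (auto simp: w_def H_def mat2_eq)
  qed
  have wH: "w t \<in> H 3" for t by (simp add: w_def H_def)
  have wt: "w t = cjU (mk 1 0 0 t) (w 1)" if "t \<noteq> 0" for t
  proof
    fix k
    have inv: "invertible (mk 1 0 0 t)" using that by (intro det_nz_inv) (simp add: det_2)
    show "w t k = cjU (mk 1 0 0 t) (w 1) k"
    proof (cases "k < 3")
      case True
      have "cj (mk 1 0 0 t) (w 1 k) = w t k"
        by (rule cj_rel[OF inv]) (simp add: w_def True mat2_eq mult.commute)
      then show ?thesis by (simp add: cj_def cjU_def)
    next
      case False then show ?thesis by (simp add: w_def cjU_def)
    qed
  qed
  have "f u = f (w 0)" if f: "f \<in> inv_alg 3" for f
  proof -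
    have pf: "f \<in> polyfun 3" using f by (simp add: inv_alg_def)
    have ent: "\<exists>p. \<forall>t. w t k $ i $ j = poly p t" for k i j
    proof (cases "k < 3")
      case True
      have "i = 1 \<or> i = 2" "j = 1 \<or> j = 2" using exhaust_2 by blast+
      then show ?thesis
      proof (elim disjE)
        assume "i = 1" "j = 2"
        then show ?thesis using True by (intro exI[of _ "[:0, u k$1$2:]"]) (simp add: w_def mult.commute)
      qed (auto simp: w_def True intro: exI[of _ "[:_:]"])
    next
      case False then show ?thesis by (intro exI[of _ 0]) (simp add: w_def)
    qed
    obtain p where p: "\<forall>t. f (w t) = poly p t" using polyfun_curve[of f 3 w] pf ent by blast
    have "poly p t = f u" if "t \<noteq> 0" for t
    proof -
      have inv: "invertible (mk 1 0 0 t)" using that by (intro det_nz_inv) (simp add: det_2)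
      have "f (w t) = f (w 1)" using wt[OF that] eqv_cjU[OF wH[of 1] inv] f by (auto simp: eqv_def)
      then show ?thesis using p w1 by simp
    qed
    then have "poly p 0 = f u" by (rule poly_const_limit[OF inf])
    then show ?thesis using p by simp
  qed
  moreover have "w 0 = (\<lambda>k. if k < 3 then mk (u k$1$1) 0 0 (u k$2$2) else 0)"
    by (rule ext) (simp add: w_def)
  ultimately show ?thesis by (simp add: eqv_def)
qed

lemma mat_eq_mk: "(A::'a::field mat2) = mk (A$1$1) (A$1$2) (A$2$1) (A$2$2)"
  by (simp add: mat2_eq)

lemma trI1: "trace ((X::'a::field mat2) ** X) = (trace X)^2 - 2 * det X"
  by (simp add: m2 power2_eq_square algebra_simps)
lemma trI2: "trace ((X::'a::field mat2) ** Y ** Y) = trace Y * trace (X ** Y) - det Y * trace X"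
  by (simp add: m2 algebra_simps)
lemma trI3: "trace ((X::'a::field mat2) ** Z ** Y) = trace X * trace (Y**Z) + trace Y * trace (X**Z) + trace Z * trace (X**Y) - trace X * trace Y * trace Z - trace (X ** Y ** Z)"
  by (simp add: m2 algebra_simps)
lemma detI4: "det ((X::'a::field mat2) + Y) = det X + det Y + trace X * trace Y - trace (X ** Y)"
  by (simp add: m2 algebra_simps)
lemma detcomm: "det ((X::'a::field mat2) ** Y - Y ** X) = - ((trace (X**Y))^2 - trace X * trace Y * trace (X**Y) + det X * (trace Y)^2 + det Y * (trace X)^2 - 4 * det X * det Y)"
  by (simp add: m2 power2_eq_square algebra_simps)
lemma trcyc: "trace ((X::'a::field mat2) ** (Y::'a mat2) ** (Z::'a mat2)) = trace (Y ** Z ** X)"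
  by (simp add: m2 algebra_simps)
lemma trcyc2: "trace ((X::'a::field mat2) ** (Y::'a mat2) ** (Z::'a mat2)) = trace (Z ** X ** Y)"
  by (simp add: m2 algebra_simps)
lemma trsym: "trace ((X::'a::field mat2) ** (Y::'a mat2)) = trace (Y ** X)"
  by (simp add: m2 algebra_simps)
lemma detK: "det ((R::'a::field mat2) - mat a - mat b ** P) = det R + a^2 + a*b*trace P + b^2 * det P - a * trace R - b * trace R * trace P + b * trace (P ** R)"
  by (simp add: m2 power2_eq_square algebra_simps)

definition col :: "'a::field \<Rightarrow> 'a \<Rightarrow> 'a mat2" where "col x1 x2 = mk x1 0 x2 0"

lemma kill_det:
  fixes K :: "'a::field mat2"
  assumes "K ** col x1 x2 = 0" "x1 \<noteq> 0 \<or> x2 \<noteq> 0" shows "det K = 0"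
proof -
  have e: "K$1$1 * x1 + K$1$2 * x2 = 0" "K$2$1 * x1 + K$2$2 * x2 = 0"
    using assms(1) by (simp_all add: col_def mat2_eq)
  have "det K * x1 = K$2$2 * (K$1$1 * x1 + K$1$2 * x2) - K$1$2 * (K$2$1 * x1 + K$2$2 * x2)"
    by (simp add: det_2 algebra_simps)
  moreover have "det K * x2 = K$1$1 * (K$2$1 * x1 + K$2$2 * x2) - K$2$1 * (K$1$1 * x1 + K$1$2 * x2)"
    by (simp add: det_2 algebra_simps)
  ultimately show ?thesis using e assms(2) by auto
qed

lemma ker_exists:
  fixes K :: "'a::field mat2"
  assumes "det K = 0" shows "\<exists>x1 x2. (x1 \<noteq> 0 \<or> x2 \<noteq> 0) \<and> K ** col x1 x2 = 0"
proof -
  have d: "K$1$1 * K$2$2 - K$1$2 * K$2$1 = 0" using assms by (simp add: det_2)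
  show ?thesis
  proof (cases "K$1$1 = 0 \<and> K$1$2 = 0")
    case False
    then show ?thesis using d
      by (intro exI[of _ "K$1$2"] exI[of _ "- K$1$1"]) (auto simp: col_def mat2_eq algebra_simps)
  next
    case c1: True
    show ?thesis
    proof (cases "K$2$1 = 0 \<and> K$2$2 = 0")
      case False
      then show ?thesis using d
        by (intro exI[of _ "K$2$2"] exI[of _ "- K$2$1"]) (auto simp: col_def mat2_eq algebra_simps)
    next
      case True
      then show ?thesis using c1 by (intro exI[of _ 1] exI[of _ 0]) (auto simp: col_def mat2_eq)
    qed
  qed
qed

definition gP :: "'a::field mat2 \<Rightarrow> 'a \<Rightarrow> 'a \<Rightarrow> 'a mat2" where
  "gP P x1 x2 = mk x1 (P$1$1*x1 + P$1$2*x2) x2 (P$2$1*x1 + P$2$2*x2)"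

definition compm :: "'a::field \<Rightarrow> 'a \<Rightarrow> 'a mat2" where "compm t d = mk 0 (-d) 1 t"

lemma gP_cyc: "P ** gP P x1 x2 = gP P x1 x2 ** compm (trace P) (det P)"
  by (simp add: gP_def compm_def m2 algebra_simps)

lemma gP_col1: "gP P x1 x2 ** col a b = col (a * x1 + b * (P$1$1*x1 + P$1$2*x2)) (a * x2 + b * (P$2$1*x1 + P$2$2*x2))"
  by (simp add: gP_def col_def mat2_eq algebra_simps)

lemma P_col: "P ** col x1 x2 = col (P$1$1*x1 + P$1$2*x2) (P$2$1*x1 + P$2$2*x2)"
  by (simp add: col_def mat2_eq)

lemma nonscalar_cyclic:
  fixes P R :: "'a::field mat2"
  assumes "det (P ** R - R ** P) \<noteq> 0"
  shows "\<exists>x1 x2. det (gP P x1 x2) \<noteq> 0"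
proof (rule ccontr)
  assume "\<not> ?thesis"
  then have a: "det (gP P 1 0) = 0" "det (gP P 0 1) = 0" "det (gP P 1 1) = 0" by auto
  then have "P$2$1 = 0" "P$1$2 = 0" "P$1$1 = P$2$2" by (simp_all add: gP_def det_2)
  then have "P ** R - R ** P = 0" by (simp add: m2 algebra_simps)
  then show False using assms by (simp add: det_2)
qed

lemma Det4:
  fixes Z M :: "'a::field mat2"
  assumes "trace Z = 0" "trace (Z ** compm t d) = 0" "trace (Z ** M) = 0" "trace (Z ** compm t d ** M) = 0"
    "det (compm t d ** M - M ** compm t d) \<noteq> 0"
  shows "Z = 0"
proof -
  define z1 z3 where "z1 = Z$1$1" "z3 = Z$2$1"
  have e1: "Z$2$2 = - z1" using assms(1) by (simp add: z1_z3_def tr2 eq_neg_iff_add_eq_0 add.commute)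
  have e2: "Z$1$2 - d * z3 + t * Z$2$2 = 0" using assms(2) by (simp add: z1_z3_def tr2 compm_def algebra_simps)
  have Z: "Z = mk z1 (d*z3 + t*z1) z3 (-z1)"
    using e1 e2 by (simp add: z1_z3_def mat2_eq) (simp add: algebra_simps eq_neg_iff_add_eq_0 diff_eq_eq)
  define a b c e where "a = M$1$1 + t * M$2$1 - M$2$2" "b = d * M$2$1 + M$1$2"
    "c = t * M$1$1 + (t^2 - d) * M$2$1 - M$1$2 - t * M$2$2" "e = d * (M$1$1 + t * M$2$1 - M$2$2)"
  have 1: "det (compm t d ** M - M ** compm t d) * z1 = b * trace (Z ** compm t d ** M) - e * trace (Z ** M)"
    by (subst (1 2) Z) (simp add: a_b_c_e_def m2 compm_def power2_eq_square algebra_simps)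
  have 2: "det (compm t d ** M - M ** compm t d) * z3 = c * trace (Z ** M) - a * trace (Z ** compm t d ** M)"
    by (subst (1 2) Z) (simp add: a_b_c_e_def m2 compm_def power2_eq_square algebra_simps)
  have "z1 = 0" "z3 = 0" using 1 2 assms(3,4,5) by auto
  then show ?thesis using Z by (simp add: mat2_eq)
qed

lemma par:
  fixes x1 x2 y1 y2 :: "'a::field"
  assumes "x1 \<noteq> 0 \<or> x2 \<noteq> 0" "x1 * y2 - y1 * x2 = 0"
  shows "\<exists>\<mu>. y1 = \<mu> * x1 \<and> y2 = \<mu> * x2"
proof (cases "x1 = 0")
  case True
  then have "x2 \<noteq> 0" using assms by auto
  then show ?thesis using assms True by (intro exI[of _ "y2 / x2"]) auto
next
  case False
  then show ?thesis using assms by (intro exI[of _ "y1 / x1"]) (auto simp: field_simps)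
qed

lemma msub_r: "((A::'a::field mat2) - B) ** (C::'a mat2) = A ** C - B ** C"
  by (simp add: mat2_eq algebra_simps)
lemma msub_l: "(C::'a::field mat2) ** ((A::'a mat2) - B) = C ** A - C ** B"
  by (simp add: mat2_eq algebra_simps)
lemma madd_r: "((A::'a::field mat2) + B) ** (C::'a mat2) = A ** C + B ** C"
  by (simp add: mat2_eq algebra_simps)

lemma eig_comm_det:
  fixes P R :: "'a::field mat2"
  assumes x: "x1 \<noteq> 0 \<or> x2 \<noteq> 0" and dg: "det (gP P x1 x2) = 0"
    and k: "(R - mat a - mat b ** P) ** col x1 x2 = 0"
  shows "det (P ** R - R ** P) = 0"
proof -
  define y1 y2 where "y1 = P$1$1*x1 + P$1$2*x2" "y2 = P$2$1*x1 + P$2$2*x2"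
  have "x1 * y2 - y1 * x2 = 0" using dg by (simp add: gP_def det_2 y1_y2_def)
  then obtain \<mu> where \<mu>: "y1 = \<mu> * x1" "y2 = \<mu> * x2" using par[OF x] by blast
  define n1 n2 where "n1 = R$1$1*x1 + R$1$2*x2" "n2 = R$2$1*x1 + R$2$2*x2"
  have kk: "n1 = a * x1 + b * y1" "n2 = a * x2 + b * y2" using k
    by (simp_all add: col_def mat2_eq n1_n2_def y1_y2_def algebra_simps)
  define \<nu> where "\<nu> = a + b * \<mu>"
  have n: "n1 = \<nu> * x1" "n2 = \<nu> * x2" using kk \<mu> by (simp_all add: \<nu>_def algebra_simps)
  have "(P ** R - R ** P)$1$1 * x1 + (P ** R - R ** P)$1$2 * x2 = P$1$1 * n1 + P$1$2 * n2 - R$1$1 * y1 - R$1$2 * y2"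
    by (simp add: n1_n2_def y1_y2_def algebra_simps)
  also have "\<dots> = P$1$1 * (\<nu> * x1) + P$1$2 * (\<nu> * x2) - R$1$1 * (\<mu> * x1) - R$1$2 * (\<mu> * x2)" by (simp only: n \<mu>)
  also have "\<dots> = \<nu> * (P$1$1*x1 + P$1$2*x2) - \<mu> * (R$1$1*x1 + R$1$2*x2)" by (simp add: algebra_simps)
  also have "\<dots> = \<nu> * y1 - \<mu> * n1" by (simp only: y1_y2_def n1_n2_def)
  also have "\<dots> = 0" by (simp add: n \<mu>)
  finally have c1: "(P ** R - R ** P)$1$1 * x1 + (P ** R - R ** P)$1$2 * x2 = 0" .
  have "(P ** R - R ** P)$2$1 * x1 + (P ** R - R ** P)$2$2 * x2 = P$2$1 * n1 + P$2$2 * n2 - R$2$1 * y1 - R$2$2 * y2"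
    by (simp add: n1_n2_def y1_y2_def algebra_simps)
  also have "\<dots> = P$2$1 * (\<nu> * x1) + P$2$2 * (\<nu> * x2) - R$2$1 * (\<mu> * x1) - R$2$2 * (\<mu> * x2)" by (simp only: n \<mu>)
  also have "\<dots> = \<nu> * (P$2$1*x1 + P$2$2*x2) - \<mu> * (R$2$1*x1 + R$2$2*x2)" by (simp add: algebra_simps)
  also have "\<dots> = \<nu> * y2 - \<mu> * n2" by (simp only: y1_y2_def n1_n2_def)
  also have "\<dots> = 0" by (simp add: n \<mu>)
  finally have c2: "(P ** R - R ** P)$2$1 * x1 + (P ** R - R ** P)$2$2 * x2 = 0" .
  have "(P ** R - R ** P) ** col x1 x2 = 0" using c1 c2 by (simp add: col_def mat2_eq)
  then show ?thesis using kill_det x by blast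
qed

lemma pair_lemma:
  fixes P R Y P' R' Y' :: "'a::field mat2"
  assumes c: "det (P**R - R**P) \<noteq> 0"
  and h1: "trace P' = trace P" "det P' = det P" "trace R' = trace R" "det R' = det R" "trace (P'**R') = trace (P**R)"
  and h2: "trace Y' = trace Y" "trace (Y'**P') = trace (Y**P)" "trace (Y'**R') = trace (Y**R)"
     "trace (Y'**P'**R') = trace (Y**P**R)"
  shows "\<exists>g g'. invertible g \<and> invertible g' \<and> cj g P = cj g' P' \<and> cj g R = cj g' R' \<and> cj g Y = cj g' Y'"
proof -
  obtain x1 x2 where dg: "det (gP P x1 x2) \<noteq> 0" using nonscalar_cyclic[OF c] by blast
  define g where "g = gP P x1 x2"
  have ig: "invertible g" using dg det_nz_inv g_def by blast
  define Q where "Q = compm (trace P) (det P)"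
  have cP: "cj g P = Q" unfolding Q_def g_def by (rule cj_rel[OF ig[unfolded g_def] gP_cyc])
  define M where "M = cj g R"
  have gM: "g ** M = R ** g" unfolding M_def by (rule cj_rel2[OF ig])
  define \<alpha> \<beta> where "\<alpha> = M$1$1" "\<beta> = M$2$1"
  have x: "x1 \<noteq> 0 \<or> x2 \<noteq> 0" using dg by (auto simp: gP_def det_2)
  have "(R - mat \<alpha> - mat \<beta> ** P) ** col x1 x2 = 0"
  proof -
    have "(g ** M)$1$1 = (R ** g)$1$1" "(g ** M)$2$1 = (R ** g)$2$1" using gM by simp_all
    then show ?thesis by (simp add: g_def gP_def \<alpha>_\<beta>_def col_def mat2_eq algebra_simps)
  qed
  then have "det (R - mat \<alpha> - mat \<beta> ** P) = 0" using kill_det x by blast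
  then have "det (R' - mat \<alpha> - mat \<beta> ** P') = 0" using h1 by (simp add: detK)
  then obtain x1' x2' where x': "x1' \<noteq> 0 \<or> x2' \<noteq> 0" and k': "(R' - mat \<alpha> - mat \<beta> ** P') ** col x1' x2' = 0"
    using ker_exists by blast
  have cdet: "det (P'**R' - R'**P') = det (P**R - R**P)" using h1 by (simp add: detcomm)
  have dg': "det (gP P' x1' x2') \<noteq> 0"
    using eig_comm_det[OF x' _ k'] cdet c by auto
  define g' where "g' = gP P' x1' x2'"
  have ig': "invertible g'" using dg' det_nz_inv g'_def by blast
  have cP': "cj g' P' = Q" unfolding Q_def g'_def h1(1,2)[symmetric] by (rule cj_rel[OF ig'[unfolded g'_def] gP_cyc])
  define M' where "M' = cj g' R'"
  have gM': "g' ** M' = R' ** g'" unfolding M'_def by (rule cj_rel2[OF ig'])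
  have "g' ** col (M'$1$1 - \<alpha>) (M'$2$1 - \<beta>) = 0"
  proof -
    have "(g' ** M')$1$1 = (R' ** g')$1$1" "(g' ** M')$2$1 = (R' ** g')$2$1" using gM' by simp_all
    moreover have "(R' - mat \<alpha> - mat \<beta> ** P')$1$1 * x1' + (R' - mat \<alpha> - mat \<beta> ** P')$1$2 * x2' = 0"
      "(R' - mat \<alpha> - mat \<beta> ** P')$2$1 * x1' + (R' - mat \<alpha> - mat \<beta> ** P')$2$2 * x2' = 0"
      using k' by (simp_all add: col_def mat2_eq)
    ultimately show ?thesis by (simp add: g'_def gP_def col_def mat2_eq algebra_simps)
  qed
  then have "M'$1$1 = \<alpha>" "M'$2$1 = \<beta>"
    using kill_det[of g'] dg' unfolding g'_def by fastforce+
  moreover have "trace M' = trace M" using h1 trace_cj[OF ig] trace_cj[OF ig'] by (simp add: M_def M'_def)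
  moreover have "trace (Q ** M') = trace (Q ** M)"
  proof -
    have "trace (Q ** M) = trace (P ** R)" using cj_mult[OF ig, of P R] trace_cj[OF ig, of "P**R"] cP by (simp add: M_def)
    moreover have "trace (Q ** M') = trace (P' ** R')" using cj_mult[OF ig', of P' R'] trace_cj[OF ig', of "P'**R'"] cP' by (simp add: M'_def)
    ultimately show ?thesis using h1 by simp
  qed
  ultimately have MM: "M' = M" by (simp add: \<alpha>_\<beta>_def Q_def compm_def m2 algebra_simps)
  define Z where "Z = cj g Y - cj g' Y'"
  have trZ: "trace Z = 0" using h2 trace_cj[OF ig] trace_cj[OF ig'] by (simp add: Z_def trace_sub)
  have trZQ: "trace (Z ** Q) = 0"
  proof -
    have "trace (cj g Y ** Q) = trace (Y ** P)" using cj_mult[OF ig, of Y P] trace_cj[OF ig, of "Y**P"] cP by simp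
    moreover have "trace (cj g' Y' ** Q) = trace (Y' ** P')" using cj_mult[OF ig', of Y' P'] trace_cj[OF ig', of "Y'**P'"] cP' by simp
    ultimately show ?thesis using h2 by (simp add: Z_def msub_r trace_sub)
  qed
  have trZM: "trace (Z ** M) = 0"
  proof -
    have "trace (cj g Y ** M) = trace (Y ** R)" using cj_mult[OF ig, of Y R] trace_cj[OF ig, of "Y**R"] by (simp add: M_def)
    moreover have "trace (cj g' Y' ** M) = trace (Y' ** R')" using cj_mult[OF ig', of Y' R'] trace_cj[OF ig', of "Y'**R'"] MM by (simp add: M'_def)
    ultimately show ?thesis using h2 by (simp add: Z_def msub_r trace_sub)
  qed
  have trZQM: "trace (Z ** Q ** M) = 0"
  proof -
    have "trace (cj g Y ** Q ** M) = trace (Y ** P ** R)"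
      using cj_mult[OF ig, of Y P] cj_mult[OF ig, of "Y**P" R] trace_cj[OF ig, of "Y**P**R"] cP by (simp add: M_def)
    moreover have "trace (cj g' Y' ** Q ** M) = trace (Y' ** P' ** R')"
      using cj_mult[OF ig', of Y' P'] cj_mult[OF ig', of "Y'**P'" R'] trace_cj[OF ig', of "Y'**P'**R'"] cP' MM by (simp add: M'_def)
    ultimately show ?thesis using h2 by (simp add: Z_def msub_r trace_sub)
  qed
  have dQM: "det (Q ** M - M ** Q) \<noteq> 0"
  proof -
    have "Q ** M - M ** Q = cj g (P ** R - R ** P)"
      using cj_mult[OF ig, of P R] cj_mult[OF ig, of R P] cP by (simp add: M_def cj_diff)
    then show ?thesis using det_cj[OF ig] c by simp
  qed
  have "Z = 0" using Det4[of Z "trace P" "det P" M] trZ trZQ trZM trZQM dQM by (simp add: Q_def)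
  then have "cj g Y = cj g' Y'" by (simp add: Z_def)
  then show ?thesis using ig ig' cP cP' MM by (intro exI[of _ g] exI[of _ g']) (simp add: M_def M'_def)
qed

definition sameS :: "(nat \<Rightarrow> 'a::field mat2) \<Rightarrow> (nat \<Rightarrow> 'a mat2) \<Rightarrow> bool" where
  "sameS u v \<longleftrightarrow> trace (v 0) = trace (u 0) \<and> trace (v 1) = trace (u 1) \<and> trace (v 2) = trace (u 2)
    \<and> det (v 0) = det (u 0) \<and> det (v 1) = det (u 1) \<and> det (v 2) = det (u 2)
    \<and> trace (v 0 ** v 1) = trace (u 0 ** u 1) \<and> trace (v 0 ** v 2) = trace (u 0 ** u 2)
    \<and> trace (v 1 ** v 2) = trace (u 1 ** u 2) \<and> trace (v 0 ** v 1 ** v 2) = trace (u 0 ** u 1 ** u 2)"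

lemma cjU_eq:
  assumes "u \<in> H 3" "v \<in> H 3" "cj g (u 0) = cj g' (v 0)" "cj g (u 1) = cj g' (v 1)" "cj g (u 2) = cj g' (v 2)"
  shows "cjU g u = cjU g' v"
proof
  fix k
  show "cjU g u k = cjU g' v k"
  proof (cases "k < 3")
    case True
    then have "k = 0 \<or> k = 1 \<or> k = 2" by auto
    then show ?thesis using assms by (auto simp: cjU_def cj_def)
  next
    case False
    then show ?thesis using assms(1,2) by (simp add: cjU_def H_def)
  qed
qed

lemma eqv_from_cj:
  assumes "u \<in> H 3" "v \<in> H 3" "invertible g" "invertible g'"
    "cj g (u 0) = cj g' (v 0)" "cj g (u 1) = cj g' (v 1)" "cj g (u 2) = cj g' (v 2)"
  shows "eqv u v"
proof -
  have "cjU g u = cjU g' v" using cjU_eq assms by blast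
  then show ?thesis using eqv_cjU[OF assms(1,3)] eqv_cjU[OF assms(2,4)] eqv_sym eqv_trans by metis
qed

lemma generic_case:
  fixes u v :: "nat \<Rightarrow> 'a::field mat2"
  assumes uH: "u \<in> H 3" and vH: "v \<in> H 3" and S: "sameS u v"
  and gen: "det (u 0 ** u 1 - u 1 ** u 0) \<noteq> 0 \<or> det (u 0 ** u 2 - u 2 ** u 0) \<noteq> 0
     \<or> det (u 0 ** (u 1 + u 2) - (u 1 + u 2) ** u 0) \<noteq> 0 \<or> det (u 1 ** u 2 - u 2 ** u 1) \<noteq> 0
     \<or> det (u 1 ** (u 0 + u 2) - (u 0 + u 2) ** u 1) \<noteq> 0"
  shows "eqv u v"
proof -
  define A B C A' B' C' where "A = u 0" "B = u 1" "C = u 2" "A' = v 0" "B' = v 1" "C' = v 2"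
  have s: "trace A' = trace A" "trace B' = trace B" "trace C' = trace C" "det A' = det A" "det B' = det B" "det C' = det C"
    "trace (A' ** B') = trace (A ** B)" "trace (A' ** C') = trace (A ** C)" "trace (B' ** C') = trace (B ** C)"
    "trace (A' ** B' ** C') = trace (A ** B ** C)"
    using S by (simp_all add: sameS_def A_B_C_A'_B'_C'_def)
  have ACB: "trace (A' ** C' ** B') = trace (A ** C ** B)" using s by (simp add: trI3[of A' C' B'] trI3[of A C B])
  have fin: "eqv u v" if "invertible g" "invertible g'" "cj g A = cj g' A'" "cj g B = cj g' B'" "cj g C = cj g' C'" for g g'
    using eqv_from_cj[OF uH vH that(1,2)] that(3-) by (simp add: A_B_C_A'_B'_C'_def)
  consider "det (A ** B - B ** A) \<noteq> 0" | "det (A ** C - C ** A) \<noteq> 0" | "det (A ** (B + C) - (B + C) ** A) \<noteq> 0"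
    | "det (B ** C - C ** B) \<noteq> 0" | "det (B ** (A + C) - (A + C) ** B) \<noteq> 0"
    using gen by (auto simp: A_B_C_A'_B'_C'_def)
  then show ?thesis
  proof cases
    case 1
    obtain g g' where "invertible g" "invertible g'" "cj g A = cj g' A'" "cj g B = cj g' B'" "cj g C = cj g' C'"
      using pair_lemma[OF 1, of A' B' C' C] s trsym[of C' A'] trsym[of C A] trsym[of C' B'] trsym[of C B]
        trcyc2[of A' B' C'] trcyc2[of A B C] by auto
    then show ?thesis using fin by blast
  next
    case 2
    obtain g g' where "invertible g" "invertible g'" "cj g A = cj g' A'" "cj g C = cj g' C'" "cj g B = cj g' B'"
      using pair_lemma[OF 2, of A' C' B' B] s ACB trsym[of B' A'] trsym[of B A]
        trcyc2[of A' C' B'] trcyc2[of A C B] by auto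
    then show ?thesis using fin by blast
  next
    case 3
    have e1: "trace (B' + C') = trace (B + C)" "det (B' + C') = det (B + C)"
      "trace (A' ** (B' + C')) = trace (A ** (B + C))"
      using s by (simp_all add: trace_add detI4 matrix_add_ldistrib)
    have e2: "trace (C' ** A') = trace (C ** A)" "trace (C' ** (B' + C')) = trace (C ** (B + C))"
      using s by (simp_all add: matrix_add_ldistrib trace_add trI1 trsym[of C' B'] trsym[of C B] trsym[of C' A'] trsym[of C A])
    have e3: "trace (C' ** A' ** (B' + C')) = trace (C ** A ** (B + C))"
    proof -
      have "trace (C' ** A' ** (B' + C')) = trace (A' ** B' ** C') + trace (A' ** C' ** C')"
        by (simp add: matrix_add_ldistrib trace_add trcyc[of C' A' B'] trcyc[of C' A' C'])
      moreover have "trace (C ** A ** (B + C)) = trace (A ** B ** C) + trace (A ** C ** C)"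
        by (simp add: matrix_add_ldistrib trace_add trcyc[of C A B] trcyc[of C A C])
      ultimately show ?thesis using s by (simp add: trI2)
    qed
    obtain g g' where g: "invertible g" "invertible g'" "cj g A = cj g' A'" "cj g (B + C) = cj g' (B' + C')" "cj g C = cj g' C'"
      using pair_lemma[OF 3, of A' "B' + C'" C' C] s e1 e2 e3 by auto
    then have "cj g B = cj g' B'" by (simp add: cj_add)
    then show ?thesis using fin g by blast
  next
    case 4
    obtain g g' where "invertible g" "invertible g'" "cj g B = cj g' B'" "cj g C = cj g' C'" "cj g A = cj g' A'"
      using pair_lemma[OF 4, of B' C' A' A] s trsym[of A' B'] trsym[of A B] trsym[of A' C'] trsym[of A C]
      by (auto simp: matrix_mul_assoc)
    then show ?thesis using fin by blast
  next
    case 5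
    have e1: "trace (A' + C') = trace (A + C)" "det (A' + C') = det (A + C)"
      "trace (B' ** (A' + C')) = trace (B ** (A + C))"
      using s by (simp_all add: trace_add detI4 matrix_add_ldistrib trsym[of B' A'] trsym[of B A])
    have e2: "trace (C' ** B') = trace (C ** B)" "trace (C' ** (A' + C')) = trace (C ** (A + C))"
      using s by (simp_all add: matrix_add_ldistrib trace_add trI1 trsym[of C' B'] trsym[of C B] trsym[of C' A'] trsym[of C A])
    have e3: "trace (C' ** B' ** (A' + C')) = trace (C ** B ** (A + C))"
    proof -
      have "trace (C' ** B' ** (A' + C')) = trace (A' ** C' ** B') + trace (B' ** C' ** C')"
        by (simp add: matrix_add_ldistrib trace_add trcyc2[of C' B' A'] trcyc[of C' B' C'])
      moreover have "trace (C ** B ** (A + C)) = trace (A ** C ** B) + trace (B ** C ** C)"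
        by (simp add: matrix_add_ldistrib trace_add trcyc2[of C B A] trcyc[of C B C])
      ultimately show ?thesis using s ACB by (simp add: trI2)
    qed
    obtain g g' where g: "invertible g" "invertible g'" "cj g B = cj g' B'" "cj g (A + C) = cj g' (A' + C')" "cj g C = cj g' C'"
      using pair_lemma[OF 5, of B' "A' + C'" C' C] s e1 e2 e3 by auto
    then have "cj g A = cj g' A'" by (simp add: cj_add)
    then show ?thesis using fin g by blast
  qed
qed

lemma pf_diff: "f \<in> polyfun d \<Longrightarrow> g \<in> polyfun d \<Longrightarrow> (\<lambda>u. f u - g u) \<in> polyfun d"
proof -
  assume f: "f \<in> polyfun d" and g: "g \<in> polyfun d"
  have "(\<lambda>u. (-1) * g u) \<in> polyfun d" using g by (intro polyfun.pf_mult polyfun.pf_const)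
  then have "(\<lambda>u. f u + (-1) * g u) \<in> polyfun d" using f by (intro polyfun.pf_add)
  then show ?thesis by simp
qed

definition pfm :: "nat \<Rightarrow> ((nat \<Rightarrow> 'a::field mat2) \<Rightarrow> 'a mat2) \<Rightarrow> bool" where
  "pfm d X \<longleftrightarrow> (\<forall>a b. (\<lambda>u. X u $ a $ b) \<in> polyfun d)"

lemma pfm_var: "i < d \<Longrightarrow> pfm d (\<lambda>u. u i)"
  by (simp add: pfm_def polyfun.pf_var)

lemma pfm_mult: "pfm d X \<Longrightarrow> pfm d Y \<Longrightarrow> pfm d (\<lambda>u. X u ** Y u)"
  unfolding pfm_def by (auto intro!: polyfun.intros)

lemma pfm_trace: "pfm d X \<Longrightarrow> (\<lambda>u. trace (X u)) \<in> polyfun d"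
  unfolding pfm_def tr2 by (auto intro!: polyfun.intros)

lemma pfm_det: "pfm d X \<Longrightarrow> (\<lambda>u. det (X u)) \<in> polyfun d"
  unfolding pfm_def det_2 by (auto intro!: polyfun.intros pf_diff)

lemma cjU_cj: "(\<lambda>k. matrix_inv g ** u k ** g) k = cj g (u k)" by (simp add: cj_def)

lemma inv_tr: "i < d \<Longrightarrow> (\<lambda>u. trace (u i)) \<in> inv_alg (d::nat)"
  unfolding inv_alg_def using pfm_trace[OF pfm_var] trace_cj[unfolded cj_def] by auto
lemma inv_det: "i < d \<Longrightarrow> (\<lambda>u. det (u i)) \<in> inv_alg (d::nat)"
  unfolding inv_alg_def using pfm_det[OF pfm_var] det_cj[unfolded cj_def] by auto
lemma inv_tr2: "i < d \<Longrightarrow> j < d \<Longrightarrow> (\<lambda>u. trace (u i ** u j)) \<in> inv_alg (d::nat)"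
proof -
  assume ij: "i < d" "j < d"
  have "trace (matrix_inv g ** u i ** g ** (matrix_inv g ** u j ** g)) = trace (u i ** u j)" if "invertible g" for g :: "'a::field mat2" and u :: "nat \<Rightarrow> 'a mat2"
    using cj_mult[OF that, of "u i" "u j"] trace_cj[OF that, of "u i ** u j"] by (simp add: cj_def)
  then show ?thesis unfolding inv_alg_def using pfm_trace[OF pfm_mult[OF pfm_var pfm_var]] ij by auto
qed
lemma inv_tr3: "i < d \<Longrightarrow> j < d \<Longrightarrow> k < d \<Longrightarrow> (\<lambda>u. trace (u i ** u j ** u k)) \<in> inv_alg (d::nat)"
proof -
  assume ij: "i < d" "j < d" "k < d"
  have "trace (matrix_inv g ** u i ** g ** (matrix_inv g ** u j ** g) ** (matrix_inv g ** u k ** g)) = trace (u i ** u j ** u k)" if "invertible g" for g :: "'a::field mat2" and u :: "nat \<Rightarrow> 'a mat2"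
    using cj_mult[OF that, of "u i" "u j"] cj_mult[OF that, of "u i ** u j" "u k"] trace_cj[OF that, of "u i ** u j ** u k"] by (simp add: cj_def)
  then show ?thesis unfolding inv_alg_def using pfm_trace[OF pfm_mult[OF pfm_mult[OF pfm_var pfm_var] pfm_var]] ij by auto
qed

lemma eqv_sameS: "eqv u v \<Longrightarrow> sameS u (v::nat \<Rightarrow> 'a::field mat2)"
proof -
  assume e: "eqv u v"
  have "\<And>f. f \<in> inv_alg 3 \<Longrightarrow> f v = f u" using e by (auto simp: eqv_def)
  note x = this[OF inv_tr[of 0 3]] this[OF inv_tr[of 1 3]] this[OF inv_tr[of 2 3]]
    this[OF inv_det[of 0 3]] this[OF inv_det[of 1 3]] this[OF inv_det[of 2 3]]
    this[OF inv_tr2[of 0 3 1]] this[OF inv_tr2[of 0 3 2]] this[OF inv_tr2[of 1 3 2]] this[OF inv_tr3[of 0 3 1 2]]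
  then show ?thesis by (simp add: sameS_def)
qed

lemma sameS_trans: "sameS u v \<Longrightarrow> sameS v w \<Longrightarrow> sameS u w" by (simp add: sameS_def)
lemma sameS_sym: "sameS u v \<Longrightarrow> sameS v u" by (simp add: sameS_def)

definition eigv :: "'a::field mat2 \<Rightarrow> 'a \<Rightarrow> 'a \<Rightarrow> bool" where
  "eigv X p q \<longleftrightarrow> (p \<noteq> 0 \<or> q \<noteq> 0) \<and> det (gP X p q) = 0"

definition nsc :: "'a::field mat2 \<Rightarrow> bool" where
  "nsc X \<longleftrightarrow> \<not> (X$1$2 = 0 \<and> X$2$1 = 0 \<and> X$1$1 = X$2$2)"

lemma mat_col: "mat c ** col a b = col (c*a) (c*(b::'a::field))"
  by (simp add: col_def mat2_eq)

lemma eig_mu: "eigv X p q \<Longrightarrow> \<exists>\<mu>. X ** col p q = col (\<mu>*p) (\<mu>*q)"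
proof -
  assume e: "eigv X p q"
  have h: "p * (X$2$1*p + X$2$2*q) - (X$1$1*p + X$1$2*q) * q = 0" and nz: "p \<noteq> 0 \<or> q \<noteq> 0"
    using e by (auto simp: eigv_def gP_def det_2)
  obtain \<mu> where "X$1$1*p + X$1$2*q = \<mu> * p" "X$2$1*p + X$2$2*q = \<mu> * q"
    using par[OF nz h] by blast
  then show ?thesis by (intro exI[of _ \<mu>]) (simp add: col_def mat2_eq)
qed

lemma mu_eig: "p \<noteq> 0 \<or> q \<noteq> 0 \<Longrightarrow> X ** col p q = col (\<mu>*p) (\<mu>*q) \<Longrightarrow> eigv X p q"
  by (auto simp: eigv_def gP_def det_2 col_def mat2_eq algebra_simps)

lemma kerpar:
  fixes N :: "'a::field mat2"
  assumes "N \<noteq> 0" "N ** col a1 a2 = 0" "N ** col b1 b2 = 0"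
  shows "a1 * b2 - a2 * b1 = 0"
proof -
  have e: "N$1$1 * a1 + N$1$2 * a2 = 0" "N$2$1 * a1 + N$2$2 * a2 = 0"
      "N$1$1 * b1 + N$1$2 * b2 = 0" "N$2$1 * b1 + N$2$2 * b2 = 0"
    using assms(2,3) by (simp_all add: col_def mat2_eq)
  have "N$1$1 * (a1 * b2 - a2 * b1) = b2 * (N$1$1 * a1 + N$1$2 * a2) - a2 * (N$1$1 * b1 + N$1$2 * b2)"
    "N$1$2 * (a1 * b2 - a2 * b1) = a1 * (N$1$1 * b1 + N$1$2 * b2) - b1 * (N$1$1 * a1 + N$1$2 * a2)"
    "N$2$1 * (a1 * b2 - a2 * b1) = b2 * (N$2$1 * a1 + N$2$2 * a2) - a2 * (N$2$1 * b1 + N$2$2 * b2)"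
    "N$2$2 * (a1 * b2 - a2 * b1) = a1 * (N$2$1 * b1 + N$2$2 * b2) - b1 * (N$2$1 * a1 + N$2$2 * a2)"
    by (simp_all add: algebra_simps)
  then have "N$1$1 * (a1 * b2 - a2 * b1) = 0" "N$1$2 * (a1 * b2 - a2 * b1) = 0"
    "N$2$1 * (a1 * b2 - a2 * b1) = 0" "N$2$2 * (a1 * b2 - a2 * b1) = 0" using e by simp_all
  moreover have "N$1$1 \<noteq> 0 \<or> N$1$2 \<noteq> 0 \<or> N$2$1 \<noteq> 0 \<or> N$2$2 \<noteq> 0" using assms(1) by (auto simp: mat2_eq)
  ultimately show ?thesis by auto
qed

lemma NPN: "(P**R - R**P) ** P ** (P**R - R**P) = mat (det (P**R - R**P)) ** (P - mat (trace (P::'a::field mat2)))"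
  by (simp add: m2 algebra_simps)
lemma NRN: "(P**R - R**P) ** R ** (P**R - R**P) = mat (det (P**R - R**P)) ** (R - mat (trace (R::'a::field mat2)))"
  by (simp add: m2 algebra_simps)
lemma NN: "(P**R - R**P) ** (P**R - R**P) = mat (- det (P**R - R**(P::'a::field mat2)))"
  by (simp add: m2 algebra_simps)

lemma col_nth[simp]: "col a b $ 1 $ 1 = a" "col a b $ 2 $ 1 = b" "col a b $ 1 $ 2 = 0" "col a b $ 2 $ 2 = 0"
  by (simp_all add: col_def)

lemma col_ex: "(N::'a::field mat2) \<noteq> 0 \<Longrightarrow> \<exists>e1 e2. N ** col e1 e2 \<noteq> 0"
proof -
  assume "N \<noteq> 0"
  then have "N ** col 1 0 \<noteq> 0 \<or> N ** col 0 1 \<noteq> 0" by (auto simp: col_def mat2_eq)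
  then show ?thesis by blast
qed

lemma col_nz: "col a b \<noteq> 0 \<longleftrightarrow> (a \<noteq> 0 \<or> (b::'a::field) \<noteq> 0)"
  by (auto simp: col_def mat2_eq)

lemma col_eta: "(M::'a::field mat2) ** col e1 e2 = col ((M ** col e1 e2)$1$1) ((M ** col e1 e2)$2$1)"
  by (simp add: col_def mat2_eq)

lemma commL:
  fixes P R :: "'a::field mat2"
  assumes d: "det (P**R - R**P) = 0" and n: "P**R - R**P \<noteq> 0"
  shows "\<exists>p q. eigv P p q \<and> eigv R p q"
proof -
  define N where "N = P**R - R**P"
  have NN0: "N ** N = 0" using NN[of P R] d by (simp add: N_def)
  have NPN0: "N ** P ** N = 0" using NPN[of P R] d by (simp add: N_def)
  have NRN0: "N ** R ** N = 0" using NRN[of P R] d by (simp add: N_def)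
  obtain e1 e2 where c: "N ** col e1 e2 \<noteq> 0" using col_ex n N_def by blast
  define c1 c2 where "c1 = (N ** col e1 e2)$1$1" "c2 = (N ** col e1 e2)$2$1"
  have cc: "N ** col e1 e2 = col c1 c2" unfolding c1_c2_def by (rule col_eta)
  have nz: "c1 \<noteq> 0 \<or> c2 \<noteq> 0" using c cc col_nz by metis
  have k0: "N ** col c1 c2 = 0" using NN0 cc[symmetric] by (simp add: matrix_mul_assoc)
  have kP: "N ** (P ** col c1 c2) = 0" using NPN0 cc[symmetric] by (simp add: matrix_mul_assoc)
  have kR: "N ** (R ** col c1 c2) = 0" using NRN0 cc[symmetric] by (simp add: matrix_mul_assoc)
  have Nn: "N \<noteq> 0" using n N_def by simp
  have "c1 * (P ** col c1 c2)$2$1 - c2 * (P ** col c1 c2)$1$1 = 0"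
    using kerpar[OF Nn k0, of "(P ** col c1 c2)$1$1" "(P ** col c1 c2)$2$1"] kP col_eta[of P c1 c2] by simp
  then have eP: "eigv P c1 c2" using nz by (simp add: eigv_def gP_def det_2 col_def algebra_simps)
  have "c1 * (R ** col c1 c2)$2$1 - c2 * (R ** col c1 c2)$1$1 = 0"
    using kerpar[OF Nn k0, of "(R ** col c1 c2)$1$1" "(R ** col c1 c2)$2$1"] kR col_eta[of R c1 c2] by simp
  then have eR: "eigv R c1 c2" using nz by (simp add: eigv_def gP_def det_2 col_def algebra_simps)
  show ?thesis using eP eR by blast
qed

lemma comm_pres:
  fixes X Z :: "'a::field mat2"
  assumes ns: "nsc X" and cm: "X ** Z = Z ** X" and e: "eigv X p q"
  shows "eigv Z p q"
proof -
  obtain \<mu> where mu: "X ** col p q = col (\<mu>*p) (\<mu>*q)" using eig_mu[OF e] by blast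
  have nz: "p \<noteq> 0 \<or> q \<noteq> 0" using e by (simp add: eigv_def)
  define K where "K = X - mat \<mu>"
  have Kn: "K \<noteq> 0" using ns by (auto simp: K_def nsc_def mat2_eq)
  have k1: "K ** col p q = 0" using mu by (simp add: K_def msub_r mat_col)
  define z1 z2 where "z1 = (Z ** col p q)$1$1" "z2 = (Z ** col p q)$2$1"
  have zz: "Z ** col p q = col z1 z2" unfolding z1_z2_def by (rule col_eta)
  have "K ** col z1 z2 = X ** (Z ** col p q) - mat \<mu> ** (Z ** col p q)"
    by (simp add: K_def msub_r zz)
  also have "\<dots> = Z ** (X ** col p q) - mat \<mu> ** (Z ** col p q)" by (simp add: matrix_mul_assoc cm)
  also have "\<dots> = Z ** col (\<mu>*p) (\<mu>*q) - mat \<mu> ** (Z ** col p q)" by (simp only: mu)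
  also have "\<dots> = 0" by (simp add: col_def mat2_eq algebra_simps)
  finally have k2: "K ** col z1 z2 = 0" .
  have "p * z2 - q * z1 = 0" using kerpar[OF Kn k1 k2] .
  then show ?thesis using nz zz by (simp add: eigv_def gP_def det_2 z1_z2_def col_def algebra_simps)
qed

lemma par_eig:
  fixes Z :: "'a::field mat2"
  assumes e: "eigv Z r s" and p: "p \<noteq> 0 \<or> q \<noteq> 0" and d: "p * s - q * r = 0"
  shows "eigv Z p q"
proof -
  have rs: "r \<noteq> 0 \<or> s \<noteq> 0" using e by (simp add: eigv_def)
  obtain lam where l: "p = lam * r" "q = lam * s" using par[of r s q p] rs d by (auto simp: algebra_simps)
  obtain \<mu> where mu: "Z ** col r s = col (\<mu>*r) (\<mu> * s)" using eig_mu[OF e] by blast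
  have "Z ** col p q = mat lam ** (Z ** col r s)" using l by (simp add: col_def mat2_eq algebra_simps)
  also have "\<dots> = mat lam ** col (\<mu>*r) (\<mu> * s)" by (simp only: mu)
  also have "\<dots> = col (\<mu>*p) (\<mu>*q)" using l by (simp add: col_def mat2_eq algebra_simps)
  finally have "Z ** col p q = col (\<mu>*p) (\<mu>*q)" .
  then show ?thesis using mu_eig p by blast
qed

lemma eig_diff:
  fixes Y Z :: "'a::field mat2"
  assumes "eigv (Y + Z) p q" "eigv Y p q" shows "eigv Z p q"
proof -
  obtain \<mu> where mu: "(Y + Z) ** col p q = col (\<mu>*p) (\<mu>*q)" using eig_mu[OF assms(1)] by blast
  obtain \<nu> where nu: "Y ** col p q = col (\<nu>*p) (\<nu>*q)" using eig_mu[OF assms(2)] by blast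
  have "Z ** col p q = (Y + Z) ** col p q - Y ** col p q" by (simp add: madd_r)
  also have "\<dots> = col (\<mu>*p) (\<mu>*q) - col (\<nu>*p) (\<nu>*q)" by (simp only: mu nu)
  also have "\<dots> = col ((\<mu> - \<nu>)*p) ((\<mu> - \<nu>)*q)" by (simp add: col_def mat2_eq algebra_simps)
  finally have "Z ** col p q = col ((\<mu> - \<nu>)*p) ((\<mu> - \<nu>)*q)" .
  then show ?thesis using mu_eig assms(2) eigv_def by blast
qed

lemma colA:
  fixes X :: "'a::field mat2"
  assumes d: "p * s - r * q \<noteq> 0" and m: "X ** col p q = col (\<mu>*p) (\<mu>*q)"
  shows "(cj (mk p r q s) X)$2$1 = 0"
proof -
  have ig: "invertible (mk p r q s)" using d by (intro det_nz_inv) (simp add: det_2)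
  define T where "T = cj (mk p r q s) X"
  have gT: "mk p r q s ** T = X ** mk p r q s" unfolding T_def by (rule cj_rel2[OF ig])
  have e: "p * T$1$1 + r * T$2$1 = \<mu> * p" "q * T$1$1 + s * T$2$1 = \<mu> * q"
  proof -
    have "(mk p r q s ** T)$1$1 = (X ** mk p r q s)$1$1" "(mk p r q s ** T)$2$1 = (X ** mk p r q s)$2$1"
      using gT by simp_all
    moreover have "X$1$1 * p + X$1$2 * q = \<mu> * p" "X$2$1 * p + X$2$2 * q = \<mu> * q" using m by (simp_all add: col_def mat2_eq)
    ultimately show "p * T$1$1 + r * T$2$1 = \<mu> * p" "q * T$1$1 + s * T$2$1 = \<mu> * q" by simp_all
  qed
  have "(p * s - r * q) * T$2$1 = p * (q * T$1$1 + s * T$2$1) - q * (p * T$1$1 + r * T$2$1)"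
    by (simp add: algebra_simps)
  also have "\<dots> = 0" using e by (simp add: algebra_simps)
  finally show ?thesis using d by (simp add: T_def)
qed

lemma colB:
  fixes X :: "'a::field mat2"
  assumes d: "p * s - r * q \<noteq> 0" and m: "X ** col r s = col (\<mu>*r) (\<mu> * s)"
  shows "(cj (mk p r q s) X)$1$2 = 0"
proof -
  have ig: "invertible (mk p r q s)" using d by (intro det_nz_inv) (simp add: det_2)
  define T where "T = cj (mk p r q s) X"
  have gT: "mk p r q s ** T = X ** mk p r q s" unfolding T_def by (rule cj_rel2[OF ig])
  have e: "p * T$1$2 + r * T$2$2 = \<mu> * r" "q * T$1$2 + s * T$2$2 = \<mu> * s"
  proof -
    have "(mk p r q s ** T)$1$2 = (X ** mk p r q s)$1$2" "(mk p r q s ** T)$2$2 = (X ** mk p r q s)$2$2"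
      using gT by simp_all
    moreover have "X$1$1 * r + X$1$2 * s = \<mu> * r" "X$2$1 * r + X$2$2 * s = \<mu> * s" using m by (simp_all add: col_def mat2_eq)
    ultimately show "p * T$1$2 + r * T$2$2 = \<mu> * r" "q * T$1$2 + s * T$2$2 = \<mu> * s" by simp_all
  qed
  have "(p * s - r * q) * T$1$2 = s * (p * T$1$2 + r * T$2$2) - r * (q * T$1$2 + s * T$2$2)"
    by (simp add: algebra_simps)
  also have "\<dots> = 0" using e by (simp add: algebra_simps)
  finally show ?thesis using d by (simp add: T_def)
qed

lemma cj_zero: "invertible g \<Longrightarrow> cj g N = 0 \<Longrightarrow> (N::'a::field mat2) = 0"
proof -
  assume i: "invertible g" and z: "cj g N = 0"
  have "N ** g = 0" using cj_rel2[OF i, of N] z by simp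
  then have "N ** g ** matrix_inv g = 0" by simp
  then show ?thesis using inv2'[OF i] by (simp add: matrix_mul_assoc[symmetric])
qed

lemma cj_comm: "invertible g \<Longrightarrow> cj g ((X::'a::field mat2) ** Y - Y ** X) = cj g X ** cj g Y - cj g Y ** cj g X"
  by (simp add: cj_diff cj_mult)

lemma dich:
  fixes X Y Z :: "'a::field mat2"
  assumes d1: "det (X**Y - Y**X) = 0" and d2: "det (X**Z - Z**X) = 0"
    and d3: "det (X**(Y+Z) - (Y+Z)**X) = 0" and n: "X**Y - Y**X \<noteq> 0"
  shows "\<exists>p q. eigv X p q \<and> eigv Y p q \<and> eigv Z p q"
proof -
  obtain p q where eX: "eigv X p q" and eY: "eigv Y p q" using commL[OF d1 n] by blast
  have ns: "nsc X"
  proof (rule ccontr)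
    assume "\<not> nsc X"
    then have "X**Y - Y**X = 0" by (simp add: nsc_def m2 algebra_simps)
    then show False using n by simp
  qed
  have pq: "p \<noteq> 0 \<or> q \<noteq> 0" using eX eigv_def by blast
  show ?thesis
  proof (cases "X**Z - Z**X = 0")
    case True
    then have "X ** Z = Z ** X" by simp
    then show ?thesis using comm_pres[OF ns _ eX] eX eY by blast
  next
    case nZ: False
    obtain r s where eX': "eigv X r s" and eZ': "eigv Z r s" using commL[OF d2 nZ] by blast
    show ?thesis
    proof (cases "p * s - q * r = 0")
      case True
      then show ?thesis using par_eig[OF eZ' pq] eX eY by blast
    next
      case ind: False
      show ?thesis
      proof (cases "X**(Y+Z) - (Y+Z)**X = 0")
        case True
        then have "X ** (Y+Z) = (Y+Z) ** X" by simp
        then have "eigv (Y+Z) p q" using comm_pres[OF ns _ eX] by blast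
        then show ?thesis using eig_diff eX eY by blast
      next
        case nYZ: False
        define g where "g = mk p r q s"
        have dg: "p * s - r * q \<noteq> 0" using ind by (simp add: algebra_simps)
        have ig: "invertible g" using dg g_def by (simp add: det_nz_inv det_2)
        obtain a where a: "X ** col p q = col (a*p) (a*q)" using eig_mu[OF eX] by blast
        obtain b where b: "X ** col r s = col (b*r) (b * s)" using eig_mu[OF eX'] by blast
        obtain c where c: "Y ** col p q = col (c*p) (c*q)" using eig_mu[OF eY] by blast
        obtain e where e: "Z ** col r s = col (e*r) (e * s)" using eig_mu[OF eZ'] by blast
        define TX TY TZ where "TX = cj g X" "TY = cj g Y" "TZ = cj g Z"
        have z: "TX$2$1 = 0" "TX$1$2 = 0" "TY$2$1 = 0" "TZ$1$2 = 0"
          using colA[OF dg a] colB[OF dg b] colA[OF dg c] colB[OF dg e] by (simp_all add: TX_TY_TZ_def g_def)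
        have n1: "TX ** TY - TY ** TX \<noteq> 0"
        proof
          assume "TX ** TY - TY ** TX = 0"
          then have "cj g (X ** Y - Y ** X) = 0" using cj_comm[OF ig, of X Y] by (simp add: TX_TY_TZ_def)
          then show False using cj_zero[OF ig] n by blast
        qed
        have n2: "TX ** TZ - TZ ** TX \<noteq> 0"
        proof
          assume "TX ** TZ - TZ ** TX = 0"
          then have "cj g (X ** Z - Z ** X) = 0" using cj_comm[OF ig, of X Z] by (simp add: TX_TY_TZ_def)
          then show False using cj_zero[OF ig] nZ by blast
        qed
        have "det (TX ** (TY + TZ) - (TY + TZ) ** TX) = det (X**(Y+Z) - (Y+Z)**X)"
          using cj_comm[OF ig, of X "Y+Z"] det_cj[OF ig, of "X ** (Y + Z) - (Y + Z) ** X"] by (simp add: TX_TY_TZ_def cj_add)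
        then have d0: "det (TX ** (TY + TZ) - (TY + TZ) ** TX) = 0" using d3 by simp
        have f1: "(TX$1$1 - TX$2$2) * TY$1$2 \<noteq> 0" using n1 z by (auto simp: mat2_eq algebra_simps)
        have f2: "(TX$1$1 - TX$2$2) * TZ$2$1 \<noteq> 0" using n2 z by (auto simp: mat2_eq algebra_simps)
        have "det (TX ** (TY + TZ) - (TY + TZ) ** TX) = ((TX$1$1 - TX$2$2) * TY$1$2) * ((TX$1$1 - TX$2$2) * TZ$2$1)"
          using z by (simp add: det_2 algebra_simps)
        then show ?thesis using d0 f1 f2 by simp
      qed
    qed
  qed
qed

definition dg :: "(nat \<Rightarrow> 'a::field) \<Rightarrow> (nat \<Rightarrow> 'a) \<Rightarrow> nat \<Rightarrow> 'a mat2" where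
  "dg a d = (\<lambda>k. if k < 3 then mk (a k) 0 0 (d k) else 0)"

lemma dg_H: "dg a d \<in> H 3" by (simp add: dg_def H_def)

lemma triang:
  fixes u :: "nat \<Rightarrow> 'a::field mat2"
  assumes inf: "infinite (UNIV :: 'a set)" and uH: "u \<in> H 3"
    and e: "eigv (u 0) p q" "eigv (u 1) p q" "eigv (u 2) p q"
  shows "\<exists>a d. eqv u (dg a d)"
proof -
  have pq: "p \<noteq> 0 \<or> q \<noteq> 0" using e(1) eigv_def by blast
  obtain r s where d: "p * s - r * q \<noteq> 0"
  proof (cases "q = 0")
    case True then show ?thesis using pq that[of 1 0] by simp
  next
    case False then show ?thesis using that[of 0 1] by simp
  qed
  define g where "g = mk p r q s"
  have ig: "invertible g" using d by (simp add: g_def det_nz_inv det_2)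
  have tri: "cjU g u k $ 2 $ 1 = 0" if "k < 3" for k
  proof -
    have "k = 0 \<or> k = 1 \<or> k = 2" using that by auto
    then have "eigv (u k) p q" using e by auto
    then obtain \<mu> where "u k ** col p q = col (\<mu>*p) (\<mu>*q)" using eig_mu by blast
    then show ?thesis using colA[OF d] by (simp add: cjU_def cj_def g_def)
  qed
  have H: "cjU g u \<in> H 3" using cjU_H[OF uH] .
  have "eqv (cjU g u) (\<lambda>k. if k < 3 then mk (cjU g u k$1$1) 0 0 (cjU g u k$2$2) else 0)"
    by (rule tri_limit[OF inf H tri])
  then have "eqv u (dg (\<lambda>k. cjU g u k$1$1) (\<lambda>k. cjU g u k$2$2))"
    using eqv_cjU[OF uH ig] eqv_trans unfolding dg_def by blast
  then show ?thesis by blast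
qed

lemma sum_prod_eq:
  fixes a d a' d' :: "'a::field"
  assumes "a' + d' = a + d" "a' * d' = a * d"
  shows "(a' = a \<and> d' = d) \<or> (a' = d \<and> d' = a)"
proof -
  have d': "d' = a + d - a'" using assms(1) by (simp add: algebra_simps)
  have "(a' - a) * (a' - d) = 0" using assms(2) unfolding d' by (simp add: algebra_simps)
  then show ?thesis using d' by auto
qed

lemma diag_match:
  fixes a d a' d' :: "nat \<Rightarrow> 'a::field"
  assumes S: "sameS (dg a d) (dg a' d')"
  shows "eqv (dg a d) (dg a' d')"
proof -
  have tr: "a' k + d' k = a k + d k" "a' k * d' k = a k * d k" if "k < 3" for k
  proof -
    have "k = 0 \<or> k = 1 \<or> k = 2" using that by auto
    then show "a' k + d' k = a k + d k" "a' k * d' k = a k * d k"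
      using S by (auto simp: sameS_def dg_def tr2 det_2)
  qed
  have pr: "a' i * a' j + d' i * d' j = a i * a j + d i * d j" if "i < 3" "j < 3" "i \<noteq> j" for i j
  proof -
    have "(i = 0 \<and> j = 1) \<or> (i = 1 \<and> j = 0) \<or> (i = 0 \<and> j = 2) \<or> (i = 2 \<and> j = 0) \<or> (i = 1 \<and> j = 2) \<or> (i = 2 \<and> j = 1)"
      using that by auto
    then show ?thesis using S by (auto simp: sameS_def dg_def tr2 mult.commute)
  qed
  have sw: "(a' k = a k \<and> d' k = d k) \<or> (a' k = d k \<and> d' k = a k)" if "k < 3" for k
    using sum_prod_eq tr[OF that] by blast
  have all: "(\<forall>k<3. a' k = a k \<and> d' k = d k) \<or> (\<forall>k<3. a' k = d k \<and> d' k = a k)"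
  proof (rule ccontr)
    assume "\<not> ?thesis"
    then obtain i j where i: "i < 3" "\<not> (a' i = a i \<and> d' i = d i)" and j: "j < 3" "\<not> (a' j = d j \<and> d' j = a j)"
      by blast
    have si: "a' i = d i" "d' i = a i" "a i \<noteq> d i" using sw[OF i(1)] i(2) by auto
    have sj: "a' j = a j" "d' j = d j" "a j \<noteq> d j" using sw[OF j(1)] j(2) by auto
    have ij: "i \<noteq> j" using si sj by auto
    have "d i * a j + a i * d j = a i * a j + d i * d j" using pr[OF i(1) j(1) ij] si sj by simp
    then have "(a i - d i) * (a j - d j) = 0" by (simp add: algebra_simps)
    then show False using si sj by simp
  qed
  then show ?thesis
  proof
    assume "\<forall>k<3. a' k = a k \<and> d' k = d k"
    then have "dg a d = dg a' d'" by (auto simp: dg_def)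
    then show ?thesis by (simp add: eqv_refl)
  next
    assume sw: "\<forall>k<3. a' k = d k \<and> d' k = a k"
    define S where "S = (mk 0 1 1 0 :: 'a mat2)"
    have iS: "invertible S" by (simp add: S_def det_nz_inv det_2)
    have "cjU S (dg a d) = dg a' d'"
    proof
      fix k
      show "cjU S (dg a d) k = dg a' d' k"
      proof (cases "k < 3")
        case True
        have "cj S (dg a d k) = dg a' d' k"
          by (rule cj_rel[OF iS]) (use True sw in \<open>simp add: dg_def S_def mat2_eq\<close>)
        then show ?thesis by (simp add: cjU_def cj_def)
      next
        case False then show ?thesis by (simp add: cjU_def dg_def)
      qed
    qed
    then show ?thesis using eqv_cjU[OF dg_H[of a d] iS] by simp
  qed
qed

definition commu :: "(nat \<Rightarrow> 'a::field mat2) \<Rightarrow> bool" where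
  "commu u \<longleftrightarrow> (\<forall>i<3. \<forall>j<3. u i ** u j = u j ** u i)"

definition cev :: "(nat \<Rightarrow> 'a::field mat2) \<Rightarrow> bool" where
  "cev u \<longleftrightarrow> (\<exists>p q. eigv (u 0) p q \<and> eigv (u 1) p q \<and> eigv (u 2) p q)"

definition noeig :: "'a::field mat2 \<Rightarrow> bool" where
  "noeig X \<longleftrightarrow> (\<forall>p q. \<not> eigv X p q)"

lemma detXl: "det ((X::'a::field mat2) - mat l) = l^2 - trace X * l + det X"
  by (simp add: m2 power2_eq_square algebra_simps)

lemma noeig_iff: "noeig (X::'a::field mat2) \<longleftrightarrow> (\<forall>l. l^2 - trace X * l + det X \<noteq> 0)"
proof
  assume n: "noeig X"
  show "\<forall>l. l^2 - trace X * l + det X \<noteq> 0"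
  proof (intro allI notI)
    fix l assume "l^2 - trace X * l + det X = 0"
    then have "det (X - mat l) = 0" by (simp add: detXl)
    then obtain x1 x2 where x: "x1 \<noteq> 0 \<or> x2 \<noteq> 0" "(X - mat l) ** col x1 x2 = 0" using ker_exists by blast
    have "X ** col x1 x2 = col (l*x1) (l*x2)" using x(2) by (simp add: msub_r mat_col)
    then have "eigv X x1 x2" using mu_eig x(1) by blast
    then show False using n noeig_def by blast
  qed
next
  assume r: "\<forall>l. l^2 - trace X * l + det X \<noteq> 0"
  show "noeig X" unfolding noeig_def
  proof (intro allI notI)
    fix p q assume "eigv X p q"
    then obtain \<mu> where m: "X ** col p q = col (\<mu>*p) (\<mu>*q)" and nz: "p \<noteq> 0 \<or> q \<noteq> 0"
      using eig_mu eigv_def by blast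
    have "(X - mat \<mu>) ** col p q = 0" using m by (simp add: msub_r mat_col)
    then have "det (X - mat \<mu>) = 0" using kill_det nz by blast
    then show False using r by (simp add: detXl)
  qed
qed

lemma noeig_21: "noeig X \<Longrightarrow> (X::'a::field mat2)$2$1 \<noteq> 0"
proof -
  assume n: "noeig X"
  show ?thesis
  proof
    assume "X$2$1 = 0"
    then have "eigv X 1 0" by (simp add: eigv_def gP_def det_2)
    then show False using n noeig_def by blast
  qed
qed

lemma comm_companion:
  fixes Z :: "'a::field mat2"
  assumes "Z ** compm t d = compm t d ** Z"
  shows "Z = mk (Z$1$1) (- d * Z$2$1) (Z$2$1) (Z$1$1 + t * Z$2$1)"
  using assms by (simp add: compm_def mat2_eq algebra_simps)

lemma two_cases: "(2::'a::field) = 0 \<or> (2::'a) \<noteq> 0" by blast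

lemma coeff_det:
  fixes c e c' e' t d :: "'a::field"
  assumes nr: "\<forall>l. l^2 - t * l + d \<noteq> 0"
    and h1: "2 * c' + t * e' = 2 * c + t * e"
    and h2: "t * c' + (t^2 - 2*d) * e' = t * c + (t^2 - 2*d) * e"
    and h3: "c'^2 + c' * t * e' + d * e'^2 = c^2 + c * t * e + d * e^2"
  shows "c' = c \<and> e' = e"
proof -
  define x y where "x = c' - c" "y = e' - e"
  have g1: "2 * x + t * y = 0" using h1 by (simp add: x_y_def algebra_simps)
  have g2: "t * x + (t^2 - 2*d) * y = 0" using h2 by (simp add: x_y_def algebra_simps)
  show ?thesis
  proof (cases "(2::'a) = 0")
    case False
    have "(t^2 - 4*d) * y = 2 * (t * x + (t^2 - 2*d) * y) - t * (2 * x + t * y)"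
      by (simp add: algebra_simps power2_eq_square)
    then have ty: "(t^2 - 4*d) * y = 0" using g1 g2 by simp
    have four: "(4::'a) \<noteq> 0"
    proof -
      have "(4::'a) = 2 * 2" by simp
      then show ?thesis using False by (metis mult_eq_0_iff)
    qed
    have "t^2 - 4*d \<noteq> 0"
    proof
      assume "t^2 - 4*d = 0"
      then have "(t/2)^2 - t * (t/2) + d = 0" using False four
        by (simp add: power2_eq_square field_simps)
      then show False using nr by blast
    qed
    then have "y = 0" using ty by simp
    then have "x = 0" using g1 False by simp
    then show ?thesis using \<open>y = 0\<close> by (simp add: x_y_def)
  next
    case two: True
    have neg: "- z = z" for z :: 'a
    proof -
      have "z + z = 2 * z" by simp
      then have "z + z = 0" using two by simp
      then show ?thesis by (simp add: add_eq_0_iff2 eq_neg_iff_add_eq_0)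
    qed
    have twox: "2 * z = 0" for z :: 'a using two by simp
    show ?thesis
    proof (cases "t = 0")
      case False
      have "t * y = 0" using g1 twox[of x] by simp
      then have "y = 0" using False by simp
      then have "t * x = 0" using g2 by simp
      then have "x = 0" using False by simp
      then show ?thesis using \<open>y = 0\<close> by (simp add: x_y_def)
    next
      case t0: True
      have "c'^2 + d * e'^2 = c^2 + d * e^2" using h3 t0 by simp
      then have "(c'^2 - c^2) + d * (e'^2 - e^2) = 0" by (simp add: algebra_simps)
      moreover have "c'^2 - c^2 = x^2" "e'^2 - e^2 = y^2"
        unfolding x_y_def power2_eq_square using twox neg
        by (simp_all add: algebra_simps) (metis mult.assoc mult_2 neg)+
      ultimately have xy: "x^2 + d * y^2 = 0" by simp
      have "y = 0"
      proof (rule ccontr)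
        assume "y \<noteq> 0"
        then have "(x/y)^2 - t * (x/y) + d = 0" using xy t0 by (simp add: field_simps power2_eq_square)
        then show False using nr by blast
      qed
      then have "x = 0" using xy by simp
      then show ?thesis using \<open>y = 0\<close> by (simp add: x_y_def)
    qed
  qed
qed

lemma sS1: "sameS u v \<Longrightarrow> i < 3 \<Longrightarrow> trace (v i) = trace (u i) \<and> det (v i) = det (u i)"
proof -
  assume "sameS u v" "i < 3"
  moreover have "i = 0 \<or> i = 1 \<or> i = 2" using \<open>i < 3\<close> by auto
  ultimately show ?thesis by (auto simp: sameS_def)
qed

lemma sS2: "sameS u v \<Longrightarrow> i < 3 \<Longrightarrow> j < 3 \<Longrightarrow> trace (v i ** v j) = trace (u i ** u j)"
proof -
  assume S: "sameS u v" "i < 3" "j < 3"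
  have "i = 0 \<or> i = 1 \<or> i = 2" "j = 0 \<or> j = 1 \<or> j = 2" using S by auto
  moreover have "trace (v k ** v k) = trace (u k ** u k)" if "k < 3" for k using sS1[OF S(1) that] by (simp add: trI1)
  ultimately show ?thesis using S(1) by (auto simp: sameS_def trsym[of "v (Suc 0)" "v 0"] trsym[of "u (Suc 0)" "u 0"]
     trsym[of "v 2" "v 0"] trsym[of "u 2" "u 0"] trsym[of "v 2" "v (Suc 0)"] trsym[of "u 2" "u (Suc 0)"])
qed

lemma scalar_eig: "\<not> nsc X \<Longrightarrow> eigv (X::'a::field mat2) 1 0"
  by (simp add: nsc_def eigv_def gP_def det_2)

lemma b1:
  assumes c: "commu u" and n: "\<not> cev u"
  shows "\<exists>i<3. noeig (u i)"
proof -
  have "\<exists>i<3. nsc (u i)"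
  proof (rule ccontr)
    assume "\<not> (\<exists>i<3. nsc (u i))"
    then have "\<not> nsc (u k)" if "k < 3" for k using that by blast
    then have a: "\<not> nsc (u 0)" "\<not> nsc (u 1)" "\<not> nsc (u 2)" by auto
    have "eigv (u 0) 1 0" "eigv (u 1) 1 0" "eigv (u 2) 1 0"
      using scalar_eig[OF a(1)] scalar_eig[OF a(2)] scalar_eig[OF a(3)] by auto
    then show False using n cev_def by blast
  qed
  then obtain i where i: "i < 3" "nsc (u i)" by blast
  have "noeig (u i)" unfolding noeig_def
  proof (intro allI notI)
    fix p q assume e: "eigv (u i) p q"
    have "eigv (u k) p q" if "k < 3" for k
      using comm_pres[OF i(2) _ e] c i(1) that by (simp add: commu_def)
    then have "eigv (u 0) p q" "eigv (u 1) p q" "eigv (u 2) p q" by auto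
    then show False using n cev_def by blast
  qed
  then show ?thesis using i by blast
qed

lemma commcase:
  fixes u v :: "nat \<Rightarrow> 'a::field mat2"
  assumes uH: "u \<in> H 3" and vH: "v \<in> H 3" and S: "sameS u v"
    and cu: "commu u" "\<not> cev u" and cv: "commu v" "\<not> cev v"
  shows "eqv u v"
proof -
  obtain i where i: "i < 3" "noeig (u i)" using b1[OF cu] by blast
  define t d where "t = trace (u i)" "d = det (u i)"
  have nr: "\<forall>l. l^2 - t * l + d \<noteq> 0" using i(2) noeig_iff t_d_def by blast
  have nv: "noeig (v i)" using nr sS1[OF S i(1)] noeig_iff t_d_def by metis
  define g g' where "g = gP (u i) 1 0" "g' = gP (v i) 1 0"
  have ig: "invertible g" using noeig_21[OF i(2)] by (simp add: g_g'_def gP_def det_nz_inv det_2)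
  have ig': "invertible g'" using noeig_21[OF nv] by (simp add: g_g'_def gP_def det_nz_inv det_2)
  have cg: "cj g (u i) = compm t d" unfolding g_g'_def t_d_def by (rule cj_rel[OF ig[unfolded g_g'_def] gP_cyc])
  have cg': "cj g' (v i) = compm t d" unfolding g_g'_def t_d_def using sS1[OF S i(1)]
    by (metis cj_rel ig'[unfolded g_g'_def] gP_cyc)
  have key: "cj g (u k) = cj g' (v k)" if k: "k < 3" for k
  proof -
    define Z Z' where "Z = cj g (u k)" "Z' = cj g' (v k)"
    have cz: "Z ** compm t d = compm t d ** Z"
      using cu(1) k i(1) cj_mult[OF ig, of "u k" "u i"] cj_mult[OF ig, of "u i" "u k"] cg
      by (simp add: commu_def Z_Z'_def)
    have cz': "Z' ** compm t d = compm t d ** Z'"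
      using cv(1) k i(1) cj_mult[OF ig', of "v k" "v i"] cj_mult[OF ig', of "v i" "v k"] cg'
      by (simp add: commu_def Z_Z'_def)
    have Zf: "Z = mk (Z$1$1) (- d * Z$2$1) (Z$2$1) (Z$1$1 + t * Z$2$1)" by (rule comm_companion[OF cz])
    have Zf': "Z' = mk (Z'$1$1) (- d * Z'$2$1) (Z'$2$1) (Z'$1$1 + t * Z'$2$1)" by (rule comm_companion[OF cz'])
    have trZ: "trace Z' = trace Z" using sS1[OF S k] trace_cj[OF ig] trace_cj[OF ig'] by (simp add: Z_Z'_def)
    have dZ: "det Z' = det Z" using sS1[OF S k] det_cj[OF ig] det_cj[OF ig'] by (simp add: Z_Z'_def)
    have tqZ: "trace (compm t d ** Z') = trace (compm t d ** Z)"
      using sS2[OF S i(1) k] cj_mult[OF ig, of "u i" "u k"] cj_mult[OF ig', of "v i" "v k"] cg cg'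
        trace_cj[OF ig, of "u i ** u k"] trace_cj[OF ig', of "v i ** v k"] by (simp add: Z_Z'_def)
    have h1: "2 * Z'$1$1 + t * Z'$2$1 = 2 * Z$1$1 + t * Z$2$1"
      using trZ by (subst (asm) Zf, subst (asm) Zf') (simp add: tr2)
    have h2: "t * Z'$1$1 + (t^2 - 2*d) * Z'$2$1 = t * Z$1$1 + (t^2 - 2*d) * Z$2$1"
      using tqZ by (subst (asm) Zf, subst (asm) Zf') (simp add: tr2 compm_def power2_eq_square algebra_simps)
    have h3: "(Z'$1$1)^2 + Z'$1$1 * t * Z'$2$1 + d * (Z'$2$1)^2 = (Z$1$1)^2 + Z$1$1 * t * Z$2$1 + d * (Z$2$1)^2"
      using dZ by (subst (asm) Zf, subst (asm) Zf') (simp add: det_2 power2_eq_square algebra_simps)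
    have "Z'$1$1 = Z$1$1 \<and> Z'$2$1 = Z$2$1" using coeff_det[OF nr h1 h2 h3] .
    then have "Z = Z'" using Zf Zf' by metis
    then show ?thesis by (simp add: Z_Z'_def)
  qed
  show ?thesis using eqv_from_cj[OF uH vH ig ig'] key by simp
qed

lemma dets_eq:
  fixes u v :: "nat \<Rightarrow> 'a::field mat2"
  assumes S: "sameS u v"
  shows "det (v 0 ** v 1 - v 1 ** v 0) = det (u 0 ** u 1 - u 1 ** u 0)"
    "det (v 0 ** v 2 - v 2 ** v 0) = det (u 0 ** u 2 - u 2 ** u 0)"
    "det (v 0 ** (v 1 + v 2) - (v 1 + v 2) ** v 0) = det (u 0 ** (u 1 + u 2) - (u 1 + u 2) ** u 0)"
    "det (v 1 ** v 2 - v 2 ** v 1) = det (u 1 ** u 2 - u 2 ** u 1)"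
    "det (v 1 ** (v 0 + v 2) - (v 0 + v 2) ** v 1) = det (u 1 ** (u 0 + u 2) - (u 0 + u 2) ** u 1)"
proof -
  define A B C A' B' C' where "A = u 0" "B = u 1" "C = u 2" "A' = v 0" "B' = v 1" "C' = v 2"
  have s: "trace A' = trace A" "trace B' = trace B" "trace C' = trace C" "det A' = det A" "det B' = det B" "det C' = det C"
    "trace (A' ** B') = trace (A ** B)" "trace (A' ** C') = trace (A ** C)" "trace (B' ** C') = trace (B ** C)"
    using S by (simp_all add: sameS_def A_B_C_A'_B'_C'_def)
  have e1: "trace (B' + C') = trace (B + C)" "det (B' + C') = det (B + C)"
      "trace (A' ** (B' + C')) = trace (A ** (B + C))"
      using s by (simp_all add: trace_add detI4 matrix_add_ldistrib)
  have e2: "trace (A' + C') = trace (A + C)" "det (A' + C') = det (A + C)"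
      "trace (B' ** (A' + C')) = trace (B ** (A + C))"
      using s by (simp_all add: trace_add detI4 matrix_add_ldistrib trsym[of B' A'] trsym[of B A])
  show "det (v 0 ** v 1 - v 1 ** v 0) = det (u 0 ** u 1 - u 1 ** u 0)"
    using s by (simp add: detcomm A_B_C_A'_B'_C'_def)
  show "det (v 0 ** v 2 - v 2 ** v 0) = det (u 0 ** u 2 - u 2 ** u 0)"
    using s by (simp add: detcomm A_B_C_A'_B'_C'_def)
  show "det (v 1 ** v 2 - v 2 ** v 1) = det (u 1 ** u 2 - u 2 ** u 1)"
    using s by (simp add: detcomm A_B_C_A'_B'_C'_def)
  show "det (v 0 ** (v 1 + v 2) - (v 1 + v 2) ** v 0) = det (u 0 ** (u 1 + u 2) - (u 1 + u 2) ** u 0)"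
    using s e1 detcomm[of A' "B' + C'"] detcomm[of A "B + C"] by (simp add: A_B_C_A'_B'_C'_def)
  show "det (v 1 ** (v 0 + v 2) - (v 0 + v 2) ** v 1) = det (u 1 ** (u 0 + u 2) - (u 0 + u 2) ** u 1)"
    using s e2 detcomm[of B' "A' + C'"] detcomm[of B "A + C"] by (simp add: A_B_C_A'_B'_C'_def)
qed

lemma det_swap: "det ((Y::'a::field mat2) ** X - X ** Y) = det (X ** Y - Y ** X)"
  by (simp add: det_2 algebra_simps)

lemma classify:
  fixes u :: "nat \<Rightarrow> 'a::field mat2"
  assumes d: "det (u 0 ** u 1 - u 1 ** u 0) = 0" "det (u 0 ** u 2 - u 2 ** u 0) = 0"
    "det (u 0 ** (u 1 + u 2) - (u 1 + u 2) ** u 0) = 0" "det (u 1 ** u 2 - u 2 ** u 1) = 0"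
    "det (u 1 ** (u 0 + u 2) - (u 0 + u 2) ** u 1) = 0"
  and n: "\<not> cev u"
  shows "commu u"
proof -
  have c1: "u 0 ** u 1 = u 1 ** u 0"
  proof (rule ccontr)
    assume "u 0 ** u 1 \<noteq> u 1 ** u 0"
    then have "u 0 ** u 1 - u 1 ** u 0 \<noteq> 0" by simp
    then show False using dich[OF d(1,2,3)] n cev_def by blast
  qed
  have c2: "u 0 ** u 2 = u 2 ** u 0"
  proof (rule ccontr)
    assume "u 0 ** u 2 \<noteq> u 2 ** u 0"
    then have "u 0 ** u 2 - u 2 ** u 0 \<noteq> 0" by simp
    moreover have "det (u 0 ** (u 2 + u 1) - (u 2 + u 1) ** u 0) = 0" using d(3) by (simp add: add.commute)
    ultimately show False using dich[OF d(2,1)] n cev_def by blast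
  qed
  have c3: "u 1 ** u 2 = u 2 ** u 1"
  proof (rule ccontr)
    assume "u 1 ** u 2 \<noteq> u 2 ** u 1"
    then have "u 1 ** u 2 - u 2 ** u 1 \<noteq> 0" by simp
    moreover have "det (u 1 ** (u 2 + u 0) - (u 2 + u 0) ** u 1) = 0" using d(5) by (simp add: add.commute)
    moreover have "det (u 1 ** u 0 - u 0 ** u 1) = 0" using d(1) det_swap by metis
    ultimately show False using dich[OF d(4)] n cev_def by blast
  qed
  show ?thesis unfolding commu_def
  proof (intro allI impI)
    fix i j :: nat assume "i < 3" "j < 3"
    then have "i = 0 \<or> i = 1 \<or> i = 2" "j = 0 \<or> j = 1 \<or> j = 2" by auto
    then show "u i ** u j = u j ** u i" using c1 c2 c3 by auto
  qed
qed

lemma ce_cm_false: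
  fixes u v :: "nat \<Rightarrow> 'a::field mat2"
  assumes inf: "infinite (UNIV :: 'a set)" and uH: "u \<in> H 3" and S: "sameS u v"
    and cu: "cev u" and cv: "commu v" "\<not> cev v"
  shows False
proof -
  obtain p q where "eigv (u 0) p q" "eigv (u 1) p q" "eigv (u 2) p q" using cu cev_def by blast
  then obtain a d where e: "eqv u (dg a d)" using triang[OF inf uH] by blast
  have S2: "sameS (dg a d) v" using sameS_trans[OF sameS_sym[OF eqv_sameS[OF e]] S] .
  obtain i where i: "i < 3" "noeig (v i)" using b1[OF cv] by blast
  have "trace (v i) = a i + d i" "det (v i) = a i * d i" using sS1[OF S2 i(1)] i(1) by (simp_all add: dg_def tr2 det_2)
  then have "(a i)^2 - trace (v i) * a i + det (v i) = 0" by (simp add: power2_eq_square algebra_simps)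
  then show False using i(2) noeig_iff by blast
qed

theorem sep_main:
  fixes u v :: "nat \<Rightarrow> 'a::field mat2"
  assumes inf: "infinite (UNIV :: 'a set)" and uH: "u \<in> H 3" and vH: "v \<in> H 3" and S: "sameS u v"
  shows "eqv u v"
proof (cases "det (u 0 ** u 1 - u 1 ** u 0) \<noteq> 0 \<or> det (u 0 ** u 2 - u 2 ** u 0) \<noteq> 0
     \<or> det (u 0 ** (u 1 + u 2) - (u 1 + u 2) ** u 0) \<noteq> 0 \<or> det (u 1 ** u 2 - u 2 ** u 1) \<noteq> 0
     \<or> det (u 1 ** (u 0 + u 2) - (u 0 + u 2) ** u 1) \<noteq> 0")
  case True
  then show ?thesis using generic_case[OF uH vH S] by blast
next
  case False
  then have du: "det (u 0 ** u 1 - u 1 ** u 0) = 0" "det (u 0 ** u 2 - u 2 ** u 0) = 0"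
    "det (u 0 ** (u 1 + u 2) - (u 1 + u 2) ** u 0) = 0" "det (u 1 ** u 2 - u 2 ** u 1) = 0"
    "det (u 1 ** (u 0 + u 2) - (u 0 + u 2) ** u 1) = 0" by auto
  then have dv: "det (v 0 ** v 1 - v 1 ** v 0) = 0" "det (v 0 ** v 2 - v 2 ** v 0) = 0"
    "det (v 0 ** (v 1 + v 2) - (v 1 + v 2) ** v 0) = 0" "det (v 1 ** v 2 - v 2 ** v 1) = 0"
    "det (v 1 ** (v 0 + v 2) - (v 0 + v 2) ** v 1) = 0" using dets_eq[OF S] by simp_all
  have S': "sameS v u" using sameS_sym[OF S] .
  show ?thesis
  proof (cases "cev u")
    case cu: True
    show ?thesis
    proof (cases "cev v")
      case cv: True
      obtain p q where "eigv (u 0) p q" "eigv (u 1) p q" "eigv (u 2) p q" using cu cev_def by blast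
      then obtain a d where e: "eqv u (dg a d)" using triang[OF inf uH] by blast
      obtain p' q' where "eigv (v 0) p' q'" "eigv (v 1) p' q'" "eigv (v 2) p' q'" using cv cev_def by blast
      then obtain a' d' where e': "eqv v (dg a' d')" using triang[OF inf vH] by blast
      have "sameS (dg a d) (dg a' d')"
        using sameS_trans[OF sameS_trans[OF sameS_sym[OF eqv_sameS[OF e]] S] eqv_sameS[OF e']] .
      then have "eqv (dg a d) (dg a' d')" by (rule diag_match)
      then show ?thesis using e e' eqv_sym eqv_trans by metis
    next
      case cv: False
      then show ?thesis using ce_cm_false[OF inf uH S cu classify[OF dv cv] cv] by blast
    qed
  next
    case cu: False
    show ?thesis
    proof (cases "cev v")
      case cv: True
      then show ?thesis using ce_cm_false[OF inf vH S' cv classify[OF du cu] cu] by blast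
    next
      case cv: False
      show ?thesis using commcase[OF uH vH S classify[OF du cu] cu classify[OF dv cv] cv] .
    qed
  qed
qed

lemma Sset_inv: "Sset d \<subseteq> inv_alg d"
proof
  fix f assume "f \<in> Sset d"
  then consider (a) i where "i < d" "f = (\<lambda>u. trace (u i))" | (b) i where "i < d" "f = (\<lambda>u. det (u i))"
    | (c) i j where "i < j" "j < d" "f = (\<lambda>u. trace (u i ** u j))"
    | (e) i j k where "i < j" "j < k" "k < d" "f = (\<lambda>u. trace (u i ** u j ** u k))"
    unfolding Sset_def by blast
  then show "f \<in> inv_alg d"
  proof cases
    case a then show ?thesis using inv_tr by simp
  next
    case b then show ?thesis using inv_det by simp
  next
    case c then show ?thesis using inv_tr2[of i d j] by simp
  next
    case e then show ?thesis using inv_tr3[of i d j k] by simp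
  qed
qed

lemma H_le: "u \<in> H d \<Longrightarrow> d \<le> 3 \<Longrightarrow> u \<in> H 3" by (auto simp: H_def)

lemma H_zero: "u \<in> H d \<Longrightarrow> \<not> k < d \<Longrightarrow> u k = 0" by (auto simp: H_def)

lemma agree_sameS:
  fixes u v :: "nat \<Rightarrow> 'a::field mat2"
  assumes uH: "u \<in> H d" and vH: "v \<in> H d" and ag: "\<forall>f\<in>Sset d. f u = f v"
  shows "sameS u v"
proof -
  have t: "trace (v i) = trace (u i)" "det (v i) = det (u i)" for i
  proof -
    show "trace (v i) = trace (u i)"
    proof (cases "i < d")
      case True
      then have "(\<lambda>u. trace (u i)) \<in> Sset d" by (auto simp: Sset_def)
      then show ?thesis using ag by force
    next
      case False then show ?thesis using H_zero[OF uH] H_zero[OF vH] by simp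
    qed
    show "det (v i) = det (u i)"
    proof (cases "i < d")
      case True
      then have "(\<lambda>u. det (u i)) \<in> Sset d" by (auto simp: Sset_def)
      then show ?thesis using ag by force
    next
      case False then show ?thesis using H_zero[OF uH] H_zero[OF vH] by (simp add: det_2)
    qed
  qed
  have p: "trace (v i ** v j) = trace (u i ** u j)" if "i < j" for i j
  proof (cases "j < d")
    case True
    then have "(\<lambda>u. trace (u i ** u j)) \<in> Sset d" using that by (auto simp: Sset_def)
    then show ?thesis using ag by force
  next
    case False then show ?thesis using H_zero[OF uH] H_zero[OF vH] by simp
  qed
  have q: "trace (v 0 ** v 1 ** v 2) = trace (u 0 ** u 1 ** u 2)"
  proof (cases "2 < d")
    case True
    have "(\<lambda>u. trace (u 0 ** u 1 ** u 2)) \<in> Sset d" unfolding Sset_def using True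
      by (intro UnI2 CollectI exI[of _ 0] exI[of _ 1] exI[of _ 2]) auto
    then show ?thesis using ag by force
  next
    case False then show ?thesis using H_zero[OF uH, of 2] H_zero[OF vH, of 2] by simp
  qed
  show ?thesis unfolding sameS_def using t p q by simp
qed

lemma separating_S:
  fixes d :: nat
  assumes inf: "infinite (UNIV :: 'a::field set)" and d: "d \<le> 3"
  shows "separating d (Sset d :: ((nat \<Rightarrow> 'a mat2) \<Rightarrow> 'a) set)"
  unfolding separating_def
proof (intro conjI ballI impI Sset_inv)
  fix u v :: "nat \<Rightarrow> 'a mat2"
  assume uH: "u \<in> H d" and vH: "v \<in> H d" and sep: "separated_by (inv_alg d) u v"
  show "separated_by (Sset d) u v"
  proof (rule ccontr)
    assume "\<not> separated_by (Sset d) u v"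
    then have "\<forall>f\<in>Sset d. f u = f v" by (simp add: separated_by_def)
    then have "sameS u v" using agree_sameS[OF uH vH] by blast
    then have e: "eqv u v" using sep_main[OF inf H_le[OF uH d] H_le[OF vH d]] by blast
    have "f u = f v" if "f \<in> inv_alg d" for f using e inv_alg_3[OF that d] by (simp add: eqv_def)
    then show False using sep by (auto simp: separated_by_def)
  qed
qed

lemma Sset_cases:
  assumes "s \<in> Sset d"
  obtains (a) i where "i < d" "s = (\<lambda>u. trace (u i))" | (b) i where "i < d" "s = (\<lambda>u. det (u i))"
    | (c) i j where "i < j" "j < d" "s = (\<lambda>u. trace (u i ** u j))"
    | (e) i j k where "i < j" "j < k" "k < d" "s = (\<lambda>u. trace (u i ** u j ** u k))"
  using assms unfolding Sset_def by blast

lemma wit_tr: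
  fixes i d :: nat
  assumes "i < d"
  shows "\<exists>u v :: nat \<Rightarrow> 'a::field mat2. u \<in> H d \<and> v \<in> H d \<and> trace (u i) \<noteq> trace (v i)
     \<and> (\<forall>s\<in>Sset d. s u \<noteq> s v \<longrightarrow> s = (\<lambda>u. trace (u i)))"
proof (intro exI conjI ballI impI)
  let ?u = "(\<lambda>k. 0) :: nat \<Rightarrow> 'a mat2" and ?v = "(\<lambda>k. if k = i then mk 1 0 0 0 else 0) :: nat \<Rightarrow> 'a mat2"
  show "?u \<in> H d" "?v \<in> H d" using assms by (auto simp: H_def)
  show "trace (?u i) \<noteq> trace (?v i)" by (simp add: tr2)
  fix s assume s: "s \<in> Sset d" "s ?u \<noteq> s ?v"
  from s(1) show "s = (\<lambda>u. trace (u i))"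
  proof (cases rule: Sset_cases)
    case (a j) then show ?thesis using s(2) by (auto simp: tr2 split: if_splits)
  next
    case (b j) then show ?thesis using s(2) by (auto simp: det_2 split: if_splits)
  next
    case (c j k) then show ?thesis using s(2) by (auto simp: tr2 split: if_splits)
  next
    case (e j k l) then show ?thesis using s(2) by (auto simp: tr2 split: if_splits)
  qed
qed

lemma wit_det:
  fixes i d :: nat
  assumes "i < d"
  shows "\<exists>u v :: nat \<Rightarrow> 'a::field mat2. u \<in> H d \<and> v \<in> H d \<and> det (u i) \<noteq> det (v i)
     \<and> (\<forall>s\<in>Sset d. s u \<noteq> s v \<longrightarrow> s = (\<lambda>u. det (u i)))"
proof (intro exI conjI ballI impI)
  let ?u = "(\<lambda>k. 0) :: nat \<Rightarrow> 'a mat2" and ?v = "(\<lambda>k. if k = i then mk 0 1 1 0 else 0) :: nat \<Rightarrow> 'a mat2"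
  show "?u \<in> H d" "?v \<in> H d" using assms by (auto simp: H_def)
  show "det (?u i) \<noteq> det (?v i)" by (simp add: det_2)
  fix s assume s: "s \<in> Sset d" "s ?u \<noteq> s ?v"
  from s(1) show "s = (\<lambda>u. det (u i))"
  proof (cases rule: Sset_cases)
    case (a j) then show ?thesis using s(2) by (auto simp: tr2 split: if_splits)
  next
    case (b j) then show ?thesis using s(2) by (auto simp: det_2 split: if_splits)
  next
    case (c j k) then show ?thesis using s(2) by (auto simp: tr2 split: if_splits)
  next
    case (e j k l) then show ?thesis using s(2) by (auto simp: tr2 split: if_splits)
  qed
qed

lemma wit_tr2:
  fixes i j d :: nat
  assumes "i < j" "j < d"
  shows "\<exists>u v :: nat \<Rightarrow> 'a::field mat2. u \<in> H d \<and> v \<in> H d \<and> trace (u i ** u j) \<noteq> trace (v i ** v j)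
     \<and> (\<forall>s\<in>Sset d. s u \<noteq> s v \<longrightarrow> s = (\<lambda>u. trace (u i ** u j)))"
proof (intro exI conjI ballI impI)
  let ?u = "(\<lambda>k. if k = i then mk 0 1 0 0 else if k = j then mk 0 0 1 0 else 0) :: nat \<Rightarrow> 'a mat2"
    and ?v = "(\<lambda>k. if k = i then mk 0 1 0 0 else if k = j then mk 0 1 0 0 else 0) :: nat \<Rightarrow> 'a mat2"
  show "?u \<in> H d" "?v \<in> H d" using assms by (auto simp: H_def)
  show "trace (?u i ** ?u j) \<noteq> trace (?v i ** ?v j)" using assms by (simp add: tr2)
  fix s assume s: "s \<in> Sset d" "s ?u \<noteq> s ?v"
  from s(1) show "s = (\<lambda>u. trace (u i ** u j))"
  proof (cases rule: Sset_cases)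
    case (a k) then show ?thesis using s(2) by (auto simp: tr2 split: if_splits)
  next
    case (b k) then show ?thesis using s(2) by (auto simp: det_2 split: if_splits)
  next
    case (c k l) then show ?thesis using s(2) assms by (auto simp: tr2 split: if_splits)
  next
    case (e k l m) then show ?thesis using s(2) by (auto simp: tr2 split: if_splits)
  qed
qed

lemma wit_tr3:
  fixes i j k d :: nat
  assumes "i < j" "j < k" "k < d" "d \<le> 3"
  shows "\<exists>u v :: nat \<Rightarrow> 'a::field mat2. u \<in> H d \<and> v \<in> H d \<and> trace (u i ** u j ** u k) \<noteq> trace (v i ** v j ** v k)
     \<and> (\<forall>s\<in>Sset d. s u \<noteq> s v \<longrightarrow> s = (\<lambda>u. trace (u i ** u j ** u k)))"
proof -
  have ijk: "i = 0" "j = 1" "k = 2" "d = 3" using assms by auto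
  show ?thesis unfolding ijk
  proof (intro exI conjI ballI impI)
    let ?u = "(\<lambda>k. if k = 0 then mk 1 0 0 0 else if k = 1 then mk 0 1 0 0 else if k = 2 then mk 0 0 1 0 else 0) :: nat \<Rightarrow> 'a mat2"
      and ?v = "(\<lambda>k. if k = 0 then mk 1 0 0 0 else if k = 1 then mk 0 0 1 0 else if k = 2 then mk 0 1 0 0 else 0) :: nat \<Rightarrow> 'a mat2"
    show "?u \<in> H 3" "?v \<in> H 3" by (auto simp: H_def)
    show "trace (?u 0 ** ?u 1 ** ?u 2) \<noteq> trace (?v 0 ** ?v 1 ** ?v 2)" by (simp add: tr2)
    fix s assume s: "s \<in> Sset 3" "s ?u \<noteq> s ?v"
    from s(1) show "s = (\<lambda>u. trace (u 0 ** u 1 ** u 2))"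
    proof (cases rule: Sset_cases)
      case (a k) then show ?thesis using s(2) by (auto simp: tr2 split: if_splits)
    next
      case (b k) then show ?thesis using s(2) by (auto simp: det_2 split: if_splits)
    next
      case (c k l) then show ?thesis using s(2) by (auto simp: tr2 split: if_splits)
    next
      case (e k l m)
      have km: "k = 0" "l = 1" "m = 2" using e by auto
      show ?thesis unfolding e(4) km by simp
    qed
  qed
qed

lemma min_wit:
  fixes s :: "(nat \<Rightarrow> 'a::field mat2) \<Rightarrow> 'a"
  assumes "s \<in> Sset d" "d \<le> 3"
  shows "\<exists>u v. u \<in> H d \<and> v \<in> H d \<and> s u \<noteq> s v \<and> (\<forall>s'\<in>Sset d. s' u \<noteq> s' v \<longrightarrow> s' = s)"
  using assms(1)
proof (cases rule: Sset_cases)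
  case (a i) then show ?thesis using wit_tr[of i d] by auto
next
  case (b i) then show ?thesis using wit_det[of i d] by auto
next
  case (c i j) then show ?thesis using wit_tr2[of i j d] by auto
next
  case (e i j k) then show ?thesis using wit_tr3[of i j k d] assms(2) by auto
qed

theorem lemma2:
  assumes "infinite (UNIV :: 'a::field set)"
    and "d \<in> {1, 2, 3}"
  shows "minimal_separating d (Sset d :: ((nat \<Rightarrow> 'a mat2) \<Rightarrow> 'a) set)"
proof -
  have d: "d \<le> 3" using assms(2) by auto
  have "\<not> separating d S'" if S': "S' \<subset> (Sset d :: ((nat \<Rightarrow> 'a mat2) \<Rightarrow> 'a) set)" for S'
  proof
    assume sep: "separating d S'"
    obtain s where s: "s \<in> Sset d" "s \<notin> S'" using S' by blast
    obtain u v where uv: "u \<in> H d" "v \<in> H d" "s u \<noteq> s v" "\<forall>s'\<in>Sset d. s' u \<noteq> s' v \<longrightarrow> s' = s"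
      using min_wit[OF s(1) d] by blast
    have "separated_by (inv_alg d) u v" using Sset_inv s(1) uv(3) by (auto simp: separated_by_def)
    then have "separated_by S' u v" using sep uv(1,2) by (simp add: separating_def)
    then obtain s' where "s' \<in> S'" "s' u \<noteq> s' v" by (auto simp: separated_by_def)
    then show False using uv(4) S' s(2) by blast
  qed
  then show ?thesis using separating_S[OF assms(1) d] by (simp add: minimal_separating_def)
qed

end
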